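(* Let $-\infty<a<b<\infty$, let $y:[a,b]\to\mathbb{R}$ be $L$-Lipschitz and let $\gamma=\{t+iy(t):t\in[a,b]\}$. Let $\varphi$ be a subharmonic function on a neighborhood $U$ of $\gamma$ in $\mathbb{C}$ such that the measure $\mu:=\frac{1}{2\pi}\Delta\varphi|_U$ has total mass on $U$ strictly less than $1$. Then $\int_\gamma e^{-\varphi}\,ds<\infty$ (bounded by a constant depending on $L,a,b$, the mass of $\mu$, and $\varphi$).
   Context: $ds$ is arc length on $\gamma$. $\Delta\varphi$ is the Laplacian of $\varphi$ in the sense of distributions (a nonnegative measure). *)

theory Defs
  imports "HOL-Analysis.Analysis"
begin

definition usc_on :: "complex set \<Rightarrow> (complex \<Rightarrow> ereal) \<Rightarrow> bool" where
  "usc_on U \<phi> \<longleftrightarrow> (\<forall>z\<in>U. \<forall>c. \<phi> z < c \<longrightarrow> (\<forall>\<^sub>F w in at z within U. \<phi> w < c))"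

text \<open>Circle average (1/2pi) int_0^{2pi} phi(z + r e^{i theta}) d theta, for a function
  bounded above on the circle (positive part minus negative part, in ereal).\<close>
definition circle_avg :: "(complex \<Rightarrow> ereal) \<Rightarrow> complex \<Rightarrow> real \<Rightarrow> ereal" where
  "circle_avg \<phi> z r =
     ereal (1 / (2 * pi)) *
       (enn2ereal (\<integral>\<^sup>+ \<theta>. e2ennreal (\<phi> (z + of_real r * cis \<theta>)) * indicator {0..2*pi} \<theta> \<partial>lborel)
      - enn2ereal (\<integral>\<^sup>+ \<theta>. e2ennreal (- \<phi> (z + of_real r * cis \<theta>)) * indicator {0..2*pi} \<theta> \<partial>lborel))"

definition subharmonic_on :: "complex set \<Rightarrow> (complex \<Rightarrow> ereal) \<Rightarrow> bool" where
  "subharmonic_on U \<phi> \<longleftrightarrow> open U \<and> (\<forall>z\<in>U. \<phi> z < \<infinity>) \<and> usc_on U \<phi> \<and>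
     (\<forall>z r. 0 < r \<and> cball z r \<subseteq> U \<longrightarrow> \<phi> z \<le> circle_avg \<phi> z r)"

definition dpart :: "complex \<Rightarrow> (complex \<Rightarrow> real) \<Rightarrow> complex \<Rightarrow> real" where
  "dpart v f = (\<lambda>x. frechet_derivative f (at x) v)"

definition smooth_fun :: "(complex \<Rightarrow> real) \<Rightarrow> bool" where
  "smooth_fun f \<longleftrightarrow> (\<forall>vs x. foldr dpart vs f differentiable (at x))"

definition laplacian :: "(complex \<Rightarrow> real) \<Rightarrow> complex \<Rightarrow> real" where
  "laplacian f = (\<lambda>x. dpart 1 (dpart 1 f) x + dpart \<i> (dpart \<i> f) x)"

definition tsupport :: "(complex \<Rightarrow> real) \<Rightarrow> complex set" where
  "tsupport f = closure {x. f x \<noteq> 0}"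

definition test_fun :: "complex set \<Rightarrow> (complex \<Rightarrow> real) \<Rightarrow> bool" where
  "test_fun U \<psi> \<longleftrightarrow> smooth_fun \<psi> \<and> compact (tsupport \<psi>) \<and> tsupport \<psi> \<subseteq> U"

definition distr_laplacian_on :: "complex set \<Rightarrow> (complex \<Rightarrow> ereal) \<Rightarrow> complex measure \<Rightarrow> bool" where
  "distr_laplacian_on U \<phi> \<nu> \<longleftrightarrow>
     sets \<nu> = sets borel \<and> emeasure \<nu> (- U) = 0 \<and>
     (\<forall>K. compact K \<and> K \<subseteq> U \<longrightarrow> emeasure \<nu> K < \<infinity>) \<and>
     (AE z in lborel. z \<in> U \<longrightarrow> \<phi> z \<noteq> - \<infinity>) \<and>
     (\<forall>K. compact K \<and> K \<subseteq> U \<longrightarrow> set_integrable lborel K (\<lambda>z. real_of_ereal (\<phi> z))) \<and>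
     (\<forall>\<psi>. test_fun U \<psi> \<longrightarrow>
        (\<integral>z. real_of_ereal (\<phi> z) * laplacian \<psi> z \<partial>lborel) = (\<integral>z. \<psi> z \<partial>\<nu>))"

definition exp_neg :: "ereal \<Rightarrow> ennreal" where
  "exp_neg x = (if x = - \<infinity> then \<infinity> else ennreal (exp (- real_of_ereal x)))"

end

theory Submission
  imports Defs "HOL-Analysis.Analysis"
begin


definition rho :: "nat \<Rightarrow> real \<Rightarrow> real" where
  "rho k x = (if x > 0 then exp (- inverse x) * inverse x ^ k else 0)"

lemma rho_tendsto0: "(rho k \<longlongrightarrow> 0) (at 0)"
proof -
  have r: "(rho k \<longlongrightarrow> 0) (at_right 0)"
  proof -
    have "((\<lambda>y. y ^ k / exp y) \<longlongrightarrow> (0::real)) at_top" by (rule tendsto_power_div_exp_0)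
    then have "((\<lambda>x. (inverse x) ^ k / exp (inverse x)) \<longlongrightarrow> (0::real)) (at_right 0)"
      by (rule filterlim_compose) (rule filterlim_inverse_at_top_right)
    moreover have "eventually (\<lambda>x. (inverse x) ^ k / exp (inverse x) = rho k x) (at_right 0)"
      by (simp add: eventually_at_right_less rho_def exp_minus field_simps eventually_mono[OF eventually_at_right_less])
    ultimately show ?thesis by (rule Lim_transform_eventually)
  qed
  have l: "(rho k \<longlongrightarrow> 0) (at_left 0)"
  proof -
    have ev: "eventually (\<lambda>x. x < 0) (at_left (0::real))" by (simp add: eventually_at_filter)
    have "eventually (\<lambda>x. 0 = rho k x) (at_left (0::real))"
      by (rule eventually_mono[OF ev]) (simp add: rho_def)
    then show ?thesis by (rule Lim_transform_eventually[OF tendsto_const])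
  qed
  show ?thesis using r l by (simp add: filterlim_split_at)
qed

lemma rho_deriv: "(rho k has_real_derivative (rho (k+2) x - real k * rho (k+1) x)) (at x)"
proof (cases "x > 0")
  case True
  define D where "D = exp (- inverse x) * (inverse x ^ 2) * inverse x ^ k + exp (- inverse x) * (real k * inverse x ^ (k - 1) * (- (inverse x ^ 2)))"
  have d: "((\<lambda>x. exp (- inverse x) * inverse x ^ k) has_real_derivative D) (at x)"
    unfolding D_def
    using True by (auto intro!: derivative_eq_intros simp: power2_eq_square)
  have e: "D = rho (k+2) x - real k * rho (k+1) x"
  proof (cases k)
    case 0 then show ?thesis using True by (simp add: D_def rho_def power2_eq_square)
  next
    case (Suc j) then show ?thesis using True by (simp add: D_def rho_def power2_eq_square algebra_simps)
  qed
  show ?thesis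
    apply (rule has_field_derivative_transform_within_open[where S="{0<..}"])
    using d e True by (auto simp: rho_def)
next
  case False
  show ?thesis
  proof (cases "x < 0")
    case True
    have z: "rho (k+2) x - real k * rho (k+1) x = 0" using True by (simp add: rho_def)
    have "((\<lambda>_. 0::real) has_real_derivative 0) (at x)" by simp
    then show ?thesis unfolding z
      apply (rule has_field_derivative_transform_within_open[where S="{..<0}"])
      using True by (auto simp: rho_def)
  next
    case False
    with \<open>\<not> x > 0\<close> have x0: "x = 0" by simp
    have "((\<lambda>y. (rho k y - rho k 0) / (y - 0)) \<longlongrightarrow> 0) (at 0)"
    proof -
      have "eventually (\<lambda>y. rho (k+1) y = (rho k y - rho k 0) / (y - 0)) (at (0::real))"
        by (rule eventually_mono[OF eventually_at_topological[THEN iffD2]])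
           (auto simp: rho_def field_simps)
      then show ?thesis using rho_tendsto0[of "k+1"] by (rule Lim_transform_eventually[rotated])
    qed
    then show ?thesis using x0 by (simp add: has_field_derivative_iff rho_def)
  qed
qed

inductive_set A1 :: "(real \<Rightarrow> real) set" where
  A1c: "(\<lambda>_. c) \<in> A1"
| A1i: "(\<lambda>x. x) \<in> A1"
| A1r: "rho k \<in> A1"
| A1aff: "f \<in> A1 \<Longrightarrow> (\<lambda>x. f (a * x + b)) \<in> A1"
| A1add: "f \<in> A1 \<Longrightarrow> g \<in> A1 \<Longrightarrow> (\<lambda>x. f x + g x) \<in> A1"
| A1mult: "f \<in> A1 \<Longrightarrow> g \<in> A1 \<Longrightarrow> (\<lambda>x. f x * g x) \<in> A1"
| A1inv: "g \<in> A1 \<Longrightarrow> (\<forall>x. g x \<noteq> 0) \<Longrightarrow> (\<lambda>x. inverse (g x)) \<in> A1"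

lemma exA1: "g \<in> A1 \<Longrightarrow> (\<forall>x. (f has_real_derivative g x) (at x)) \<Longrightarrow> \<exists>f'\<in>A1. \<forall>x. (f has_real_derivative f' x) (at x)"
  by blast

lemma A1_deriv: "f \<in> A1 \<Longrightarrow> \<exists>f'\<in>A1. \<forall>x. (f has_real_derivative f' x) (at x)"
proof (induction rule: A1.induct)
  case (A1c c)
  then show ?case by (intro bexI[of _ "\<lambda>_. 0"] A1.intros) auto
next
  case A1i
  then show ?case by (intro bexI[of _ "\<lambda>_. 1"] A1.intros) auto
next
  case (A1r k)
  have h1: "(\<lambda>x. rho (k+2) x + (- real k) * rho (k+1) x) \<in> A1"
    by (intro A1.intros)
  have h2: "\<forall>x. (rho k has_real_derivative (\<lambda>x. rho (k+2) x + (- real k) * rho (k+1) x) x) (at x)"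
    using rho_deriv by simp
  show ?case by (rule bexI[where x="\<lambda>x. rho (k+2) x + (- real k) * rho (k+1) x", OF _ h1]) (use h2 in simp)
next
  case (A1aff f a b)
  then obtain f' where f': "f' \<in> A1" "\<forall>x. (f has_real_derivative f' x) (at x)" by blast
  have "(\<lambda>x. a * f' (a * x + b)) \<in> A1" by (intro A1.intros f')
  moreover have "\<forall>x. ((\<lambda>x. f (a * x + b)) has_real_derivative (\<lambda>x. a * f' (a * x + b)) x) (at x)"
  proof
    fix x
    have "((\<lambda>x. a * x + b) has_real_derivative a) (at x)" by (auto intro!: derivative_eq_intros)
    from DERIV_chain2[OF f'(2)[rule_format] this] show "((\<lambda>x. f (a * x + b)) has_real_derivative (\<lambda>x. a * f' (a * x + b)) x) (at x)"
      by (simp add: mult.commute)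
  qed
  ultimately show ?case by (rule exA1)
next
  case (A1add f g)
  then obtain f' g' where f': "f' \<in> A1" "\<forall>x. (f has_real_derivative f' x) (at x)"
    and g': "g' \<in> A1" "\<forall>x. (g has_real_derivative g' x) (at x)" by blast
  have "(\<lambda>x. f' x + g' x) \<in> A1" by (intro A1.intros f' g')
  moreover have "\<forall>x. ((\<lambda>x. f x + g x) has_real_derivative (\<lambda>x. f' x + g' x) x) (at x)"
    using f'(2) g'(2) by (auto intro!: derivative_eq_intros)
  ultimately show ?case by (rule exA1)
next
  case (A1mult f g)
  then obtain f' g' where f': "f' \<in> A1" "\<forall>x. (f has_real_derivative f' x) (at x)"
    and g': "g' \<in> A1" "\<forall>x. (g has_real_derivative g' x) (at x)" by blast
  have "(\<lambda>x. f' x * g x + f x * g' x) \<in> A1" by (intro A1.intros f' g' A1mult.hyps)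
  moreover have "\<forall>x. ((\<lambda>x. f x * g x) has_real_derivative (\<lambda>x. f' x * g x + f x * g' x) x) (at x)"
    using f'(2) g'(2) by (auto intro!: derivative_eq_intros)
  ultimately show ?case by (rule exA1)
next
  case (A1inv g)
  then obtain g' where g': "g' \<in> A1" "\<forall>x. (g has_real_derivative g' x) (at x)" by blast
  have "(\<lambda>x. (- 1) * g' x * (inverse (g x) * inverse (g x))) \<in> A1"
    by (intro A1.intros g' A1inv.hyps)
  moreover have "\<forall>x. ((\<lambda>x. inverse (g x)) has_real_derivative (\<lambda>x. (- 1) * g' x * (inverse (g x) * inverse (g x))) x) (at x)"
    using g'(2) A1inv.hyps(2) by (auto intro!: derivative_eq_intros simp: power2_eq_square)
  ultimately show ?case by (rule exA1)
qed

definition smooth1 :: "(real \<Rightarrow> real) \<Rightarrow> bool" where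
  "smooth1 f \<longleftrightarrow> (\<forall>n x. ((deriv ^^ n) f) differentiable (at x))"

lemma smooth1_closed:
  assumes "\<And>f. f \<in> S \<Longrightarrow> (\<forall>x. f differentiable (at x)) \<and> deriv f \<in> S" "f \<in> S"
  shows "smooth1 f"
proof -
  have "\<forall>f\<in>S. (deriv ^^ n) f \<in> S" for n
    by (induction n) (auto simp: funpow_Suc_right assms(1) simp del: funpow.simps)
  then show ?thesis unfolding smooth1_def using assms by blast
qed

lemma A1_smooth1: "f \<in> A1 \<Longrightarrow> smooth1 f"
proof (rule smooth1_closed[where S=A1])
  fix f assume "f \<in> A1"
  then obtain f' where f': "f' \<in> A1" "\<forall>x. (f has_real_derivative f' x) (at x)" using A1_deriv by blast
  then have "deriv f = f'" using DERIV_imp_deriv by blast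
  then show "(\<forall>x. f differentiable (at x)) \<and> deriv f \<in> A1"
    using f' real_differentiable_def by (metis real_differentiable_def)
qed

lemma smooth1_deriv: "smooth1 f \<Longrightarrow> smooth1 (deriv f)"
  unfolding smooth1_def by (metis funpow_Suc_right comp_apply)

lemma smooth1_DERIV: "smooth1 f \<Longrightarrow> (f has_real_derivative deriv f x) (at x)"
  unfolding smooth1_def by (metis DERIV_deriv_iff_real_differentiable funpow_0)

lemma mono_deriv_nonneg:
  fixes f :: "real \<Rightarrow> real"
  assumes "mono f" "(f has_real_derivative l) (at x)"
  shows "0 \<le> l"
proof -
  have "((\<lambda>y. (f y - f x) / (y - x)) \<longlongrightarrow> l) (at x)"
    using assms(2) by (simp add: has_field_derivative_iff)
  then have t: "((\<lambda>y. (f y - f x) / (y - x)) \<longlongrightarrow> l) (at_right x)"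
    by (rule filterlim_mono) (simp_all add: at_le)
  have ev: "eventually (\<lambda>y. y > x) (at_right x)" by (simp add: eventually_at_filter)
  have "eventually (\<lambda>y. 0 \<le> (f y - f x) / (y - x)) (at_right x)"
    by (rule eventually_mono[OF ev]) (use assms(1) in \<open>auto simp: mono_def\<close>)
  then show ?thesis using tendsto_lowerbound[OF t] by simp
qed

lemma rho0_pos: "x > 0 \<Longrightarrow> rho 0 x > 0" by (simp add: rho_def)
lemma rho0_nonneg: "rho 0 x \<ge> 0" by (simp add: rho_def)
lemma rho0_zero: "x \<le> 0 \<Longrightarrow> rho 0 x = 0" by (simp add: rho_def)
lemma rho0_mono: assumes "x \<le> y" shows "rho 0 x \<le> rho 0 y"
proof (cases "x > 0")
  case True
  then have "inverse y \<le> inverse x" using assms by (simp add: le_imp_inverse_le)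
  then show ?thesis using True assms by (simp add: rho_def)
next
  case False then show ?thesis using assms by (simp add: rho_def)
qed

definition sig :: "real \<Rightarrow> real" where
  "sig x = rho 0 (x - 1/4) * inverse (rho 0 (x - 1/4) + rho 0 (1 - x))"

lemma sig_denom_pos: "rho 0 (x - 1/4) + rho 0 (1 - x) > 0"
proof (cases "x > 1/4")
  case True then show ?thesis using rho0_pos[of "x - 1/4"] rho0_nonneg[of "1 - x"] by linarith
next
  case False then show ?thesis using rho0_pos[of "1 - x"] rho0_nonneg[of "x - 1/4"] by linarith
qed

lemma sig_A1: "sig \<in> A1"
proof -
  have e1: "\<And>x. 1 * x + (- 1/4) = x - (1/4::real)" by simp
  have e2: "\<And>x. (-1) * x + 1 = 1 - (x::real)" by simp
  have r1: "(\<lambda>x. rho 0 (x - 1/4)) \<in> A1" using A1aff[OF A1r, of 0 1 "-1/4"] unfolding e1 .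
  have r2: "(\<lambda>x. rho 0 (1 - x)) \<in> A1" using A1aff[OF A1r, of 0 "-1" 1] unfolding e2 .
  have "(\<lambda>x. rho 0 (x - 1/4) * inverse (rho 0 (x - 1/4) + rho 0 (1 - x))) \<in> A1"
    using sig_denom_pos by (intro A1.intros r1 r2) (metis less_irrefl)
  then show ?thesis unfolding sig_def by simp
qed

lemma sig_smooth: "smooth1 sig" by (rule A1_smooth1[OF sig_A1])

lemma sig_0: "x \<le> 1/4 \<Longrightarrow> sig x = 0" by (simp add: sig_def rho0_zero)
lemma sig_1: "x \<ge> 1 \<Longrightarrow> sig x = 1"
  using sig_denom_pos[of x] by (simp add: sig_def rho0_zero)
lemma sig_nonneg: "sig x \<ge> 0"
  using sig_denom_pos[of x] rho0_nonneg[of "x - 1/4"] unfolding sig_def by simp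
lemma sig_le1: "sig x \<le> 1"
proof -
  have "rho 0 (x - 1/4) \<le> rho 0 (x - 1/4) + rho 0 (1 - x)" using rho0_nonneg[of "1 - x"] by simp
  then show ?thesis using sig_denom_pos[of x] by (simp add: sig_def field_simps)
qed

lemma sig_mono: "mono sig"
proof (rule monoI)
  fix x y :: real assume xy: "x \<le> y"
  show "sig x \<le> sig y"
  proof (cases "x \<le> 1/4 \<or> y \<ge> 1")
    case True then show ?thesis using sig_0 sig_1 sig_nonneg sig_le1 by (metis)
  next
    case False
    define p where "p = rho 0 (x - 1/4)" define q where "q = rho 0 (1 - x)"
    define p' where "p' = rho 0 (y - 1/4)" define q' where "q' = rho 0 (1 - y)"
    have pos: "p > 0" "q' > 0" "p' > 0" "q > 0" using False xy by (auto simp: p_def q'_def p'_def q_def intro!: rho0_pos)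
    have "p \<le> p'" "q' \<le> q" using xy by (auto simp: p_def q'_def p'_def q_def intro!: rho0_mono)
    then have "p * q' \<le> p' * q" using pos by (meson less_eq_real_def mult_mono)
    then have "p * (p' + q') \<le> p' * (p + q)" by (simp add: algebra_simps)
    then have h: "p * (p' + q') / (p + q) \<le> p'" using pos by (subst pos_divide_le_eq) (auto simp: mult.commute)
    have "p / (p + q) \<le> p' / (p' + q')" using pos h by (subst pos_le_divide_eq) auto
    then show ?thesis unfolding sig_def p_def q_def p'_def q'_def by (simp only: divide_inverse)
  qed
qed

lemma sig_deriv_nonneg: "deriv sig x \<ge> 0"
  using mono_deriv_nonneg[OF sig_mono smooth1_DERIV[OF sig_smooth]] .

lemma sig_deriv_zero: assumes "x \<le> 1/4 \<or> x \<ge> 1" shows "deriv sig x = 0"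
proof (cases "x \<le> 1/4")
  case True
  show ?thesis
  proof (rule DERIV_local_min[OF smooth1_DERIV[OF sig_smooth], of 1])
    show "\<forall>y. \<bar>x - y\<bar> < 1 \<longrightarrow> sig x \<le> sig y" using True sig_0 sig_nonneg by simp
  qed simp
next
  case False
  then have "x \<ge> 1" using assms by simp
  show ?thesis
  proof (rule DERIV_local_max[OF smooth1_DERIV[OF sig_smooth], of 1])
    show "\<forall>y. \<bar>x - y\<bar> < 1 \<longrightarrow> sig y \<le> sig x" using \<open>x \<ge> 1\<close> sig_1 sig_le1 by simp
  qed simp
qed


inductive_set B2 :: "(complex \<Rightarrow> real) set" where
  B2c: "(\<lambda>_. c) \<in> B2"
| B2re: "(\<lambda>w. Re w) \<in> B2"
| B2im: "(\<lambda>w. Im w) \<in> B2"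
| B2q: "smooth1 F \<Longrightarrow> (\<lambda>w. F ((Re w - a)\<^sup>2 + (Im w - b)\<^sup>2)) \<in> B2"
| B2add: "f \<in> B2 \<Longrightarrow> g \<in> B2 \<Longrightarrow> (\<lambda>x. f x + g x) \<in> B2"
| B2diff: "f \<in> B2 \<Longrightarrow> g \<in> B2 \<Longrightarrow> (\<lambda>x. f x - g x) \<in> B2"
| B2mult: "f \<in> B2 \<Longrightarrow> g \<in> B2 \<Longrightarrow> (\<lambda>x. f x * g x) \<in> B2"

lemma q_has_derivative:
  "((\<lambda>w. (Re w - a)\<^sup>2 + (Im w - b)\<^sup>2) has_derivative
     (\<lambda>h. 2 * (Re x - a) * Re h + 2 * (Im x - b) * Im h)) (at x)"
  by (auto intro!: derivative_eq_intros simp: algebra_simps)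

lemma Fq_has_derivative:
  assumes "smooth1 F"
  shows "((\<lambda>w. F ((Re w - a)\<^sup>2 + (Im w - b)\<^sup>2)) has_derivative
     (\<lambda>h. deriv F ((Re x - a)\<^sup>2 + (Im x - b)\<^sup>2) * (2 * (Re x - a) * Re h + 2 * (Im x - b) * Im h))) (at x)"
proof -
  have "(F has_derivative (\<lambda>h. deriv F ((Re x - a)\<^sup>2 + (Im x - b)\<^sup>2) * h)) (at ((Re x - a)\<^sup>2 + (Im x - b)\<^sup>2))"
    using smooth1_DERIV[OF assms] by (simp add: has_field_derivative_def)
  from diff_chain_at[OF q_has_derivative this] show ?thesis by (simp add: o_def)
qed

lemma B2_deriv: "f \<in> B2 \<Longrightarrow> \<exists>D. (\<forall>x. (f has_derivative D x) (at x)) \<and> (\<forall>v. (\<lambda>x. D x v) \<in> B2)"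
proof (induction rule: B2.induct)
  case (B2c c)
  show ?case by (rule exI[of _ "\<lambda>x h. 0"]) (auto intro: B2.intros)
next
  case B2re
  show ?case by (rule exI[of _ "\<lambda>x h. Re h"]) (auto intro: B2.intros bounded_linear.has_derivative[OF bounded_linear_Re])
next
  case B2im
  show ?case by (rule exI[of _ "\<lambda>x h. Im h"]) (auto intro: B2.intros bounded_linear.has_derivative[OF bounded_linear_Im])
next
  case (B2q F a b)
  show ?case
  proof (rule exI[of _ "\<lambda>x h. deriv F ((Re x - a)\<^sup>2 + (Im x - b)\<^sup>2) * (2 * (Re x - a) * Re h + 2 * (Im x - b) * Im h)"], intro conjI allI)
    fix x show "((\<lambda>w. F ((Re w - a)\<^sup>2 + (Im w - b)\<^sup>2)) has_derivative
     (\<lambda>h. deriv F ((Re x - a)\<^sup>2 + (Im x - b)\<^sup>2) * (2 * (Re x - a) * Re h + 2 * (Im x - b) * Im h))) (at x)"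
      by (rule Fq_has_derivative[OF B2q])
  next
    fix v
    show "(\<lambda>x. deriv F ((Re x - a)\<^sup>2 + (Im x - b)\<^sup>2) * (2 * (Re x - a) * Re v + 2 * (Im x - b) * Im v)) \<in> B2"
      by (intro B2.intros smooth1_deriv B2q)
  qed
next
  case (B2add f g)
  then obtain D E where D: "\<forall>x. (f has_derivative D x) (at x)" "\<forall>v. (\<lambda>x. D x v) \<in> B2"
    and E: "\<forall>x. (g has_derivative E x) (at x)" "\<forall>v. (\<lambda>x. E x v) \<in> B2" by blast
  show ?case
    by (rule exI[of _ "\<lambda>x h. D x h + E x h"]) (use D E in \<open>auto intro!: derivative_eq_intros B2.intros\<close>)
next
  case (B2diff f g)
  then obtain D E where D: "\<forall>x. (f has_derivative D x) (at x)" "\<forall>v. (\<lambda>x. D x v) \<in> B2"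
    and E: "\<forall>x. (g has_derivative E x) (at x)" "\<forall>v. (\<lambda>x. E x v) \<in> B2" by blast
  show ?case
    by (rule exI[of _ "\<lambda>x h. D x h - E x h"]) (use D E in \<open>auto intro!: derivative_eq_intros B2.intros\<close>)
next
  case (B2mult f g)
  then obtain D E where D: "\<forall>x. (f has_derivative D x) (at x)" "\<forall>v. (\<lambda>x. D x v) \<in> B2"
    and E: "\<forall>x. (g has_derivative E x) (at x)" "\<forall>v. (\<lambda>x. E x v) \<in> B2" by blast
  show ?case
    by (rule exI[of _ "\<lambda>x h. f x * E x h + D x h * g x"]) (use D E B2mult.hyps in \<open>auto intro!: derivative_eq_intros B2.intros\<close>)
qed

lemma B2_dpart: assumes "f \<in> B2" shows "\<forall>x. f differentiable (at x)" "dpart v f \<in> B2"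
proof -
  obtain D where D: "\<forall>x. (f has_derivative D x) (at x)" "\<forall>v. (\<lambda>x. D x v) \<in> B2"
    using B2_deriv[OF assms] by blast
  show "\<forall>x. f differentiable (at x)" using D(1) differentiable_def by blast
  have "dpart v f = (\<lambda>x. D x v)" unfolding dpart_def using D(1) frechet_derivative_at by metis
  then show "dpart v f \<in> B2" using D(2) by simp
qed

lemma B2_smooth: "f \<in> B2 \<Longrightarrow> smooth_fun f"
proof -
  assume f: "f \<in> B2"
  have "foldr dpart vs f \<in> B2" for vs by (induction vs) (auto simp: f B2_dpart)
  then show ?thesis unfolding smooth_fun_def using B2_dpart(1) by blast
qed

lemma dpart_Fq:
  assumes "smooth1 F"
  shows "dpart v (\<lambda>w. F ((Re w - a)\<^sup>2 + (Im w - b)\<^sup>2)) =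
    (\<lambda>x. deriv F ((Re x - a)\<^sup>2 + (Im x - b)\<^sup>2) * (2 * (Re x - a) * Re v + 2 * (Im x - b) * Im v))"
  unfolding dpart_def by (rule ext) (simp only: frechet_derivative_at[OF Fq_has_derivative[OF assms], symmetric])

lemma dpart_Fq_lin:
  assumes "smooth1 G"
  shows "dpart v (\<lambda>x. G ((Re x - a)\<^sup>2 + (Im x - b)\<^sup>2) * (2 * (Re x - a) * c + 2 * (Im x - b) * d)) =
    (\<lambda>x. deriv G ((Re x - a)\<^sup>2 + (Im x - b)\<^sup>2) * (2 * (Re x - a) * Re v + 2 * (Im x - b) * Im v)
         * (2 * (Re x - a) * c + 2 * (Im x - b) * d) + G ((Re x - a)\<^sup>2 + (Im x - b)\<^sup>2) * (2 * Re v * c + 2 * Im v * d))"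
proof -
  have hd: "((\<lambda>x. G ((Re x - a)\<^sup>2 + (Im x - b)\<^sup>2) * (2 * (Re x - a) * c + 2 * (Im x - b) * d)) has_derivative
    (\<lambda>v. deriv G ((Re x - a)\<^sup>2 + (Im x - b)\<^sup>2) * (2 * (Re x - a) * Re v + 2 * (Im x - b) * Im v)
         * (2 * (Re x - a) * c + 2 * (Im x - b) * d) + G ((Re x - a)\<^sup>2 + (Im x - b)\<^sup>2) * (2 * Re v * c + 2 * Im v * d))) (at x)" for x
    by (rule has_derivative_eq_rhs, rule has_derivative_mult[OF Fq_has_derivative[OF assms]],
        auto intro!: derivative_eq_intros simp: algebra_simps)
  show ?thesis unfolding dpart_def by (intro ext) (simp only: frechet_derivative_at[OF hd, symmetric])
qed

lemma laplacian_Fq: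
  assumes "smooth1 F"
  shows "laplacian (\<lambda>w. F ((Re w - a)\<^sup>2 + (Im w - b)\<^sup>2)) x =
    4 * (deriv F ((Re x - a)\<^sup>2 + (Im x - b)\<^sup>2) + ((Re x - a)\<^sup>2 + (Im x - b)\<^sup>2) * deriv (deriv F) ((Re x - a)\<^sup>2 + (Im x - b)\<^sup>2))"
proof -
  have sF: "smooth1 (deriv F)" using smooth1_deriv[OF assms] .
  have 1: "dpart 1 (\<lambda>w. F ((Re w - a)\<^sup>2 + (Im w - b)\<^sup>2)) =
    (\<lambda>x. deriv F ((Re x - a)\<^sup>2 + (Im x - b)\<^sup>2) * (2 * (Re x - a) * 1 + 2 * (Im x - b) * 0))"
    using dpart_Fq[OF assms, of 1] by simp
  have i: "dpart \<i> (\<lambda>w. F ((Re w - a)\<^sup>2 + (Im w - b)\<^sup>2)) =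
    (\<lambda>x. deriv F ((Re x - a)\<^sup>2 + (Im x - b)\<^sup>2) * (2 * (Re x - a) * 0 + 2 * (Im x - b) * 1))"
    using dpart_Fq[OF assms, of \<i>] by simp
  show ?thesis unfolding laplacian_def 1 i dpart_Fq_lin[OF sF]
    by (simp add: algebra_simps power2_eq_square)
qed


definition Nf :: "real \<Rightarrow> real \<Rightarrow> real \<Rightarrow> real" where
  "Nf e r s = sig (s / e) - sig (s / r)"
definition df :: "real \<Rightarrow> real \<Rightarrow> real" where
  "df e s = sig (8 * s / e) * s + (1 - sig (8 * s / e))"
definition Gf :: "real \<Rightarrow> real \<Rightarrow> real \<Rightarrow> real" where
  "Gf e r s = Nf e r s * inverse (df e s)"
definition Ff :: "real \<Rightarrow> real \<Rightarrow> real \<Rightarrow> real" where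
  "Ff e r s = integral {s..r+1} (Gf e r)"

lemma A1_aff': "f \<in> A1 \<Longrightarrow> (\<lambda>x. f (x / c)) \<in> A1"
  using A1aff[of f "inverse c" 0] by (simp add: divide_inverse mult.commute)

lemma A1_diff: "f \<in> A1 \<Longrightarrow> g \<in> A1 \<Longrightarrow> (\<lambda>x. f x - g x) \<in> A1"
  using A1add[of f "\<lambda>x. (-1) * g x"] A1mult[OF A1c[of "-1"], of g] by simp

lemma A1_differentiable: "f \<in> A1 \<Longrightarrow> f differentiable (at x)"
  using A1_deriv real_differentiable_def by blast

lemma A1_cont: "f \<in> A1 \<Longrightarrow> continuous_on S f"
  by (meson A1_differentiable continuous_at_imp_continuous_on differentiable_imp_continuous_within)

context
  fixes e r :: real
  assumes e: "0 < e" and er: "e \<le> r"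
begin

lemma r_pos: "0 < r" using e er by simp

lemma Nf_zero_small: "s \<le> e / 4 \<Longrightarrow> Nf e r s = 0"
proof -
  assume s: "s \<le> e / 4"
  have "s / e \<le> 1/4" using s e by (simp add: divide_simps)
  moreover have "s / r \<le> 1/4"
  proof (cases "s \<le> 0")
    case True then show ?thesis using r_pos by (simp add: divide_nonpos_pos)
  next
    case False then have "s / r \<le> s / e" using e er by (simp add: frac_le)
    with \<open>s / e \<le> 1/4\<close> show ?thesis by linarith
  qed
  ultimately show ?thesis by (simp add: Nf_def sig_0)
qed

lemma Nf_zero_large: "s \<ge> r \<Longrightarrow> Nf e r s = 0"
proof -
  assume s: "s \<ge> r"
  have "s / r \<ge> 1" using s r_pos by simp
  moreover have "s / e \<ge> 1" using s e er by simp
  ultimately show ?thesis by (simp add: Nf_def sig_1)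
qed

lemma Nf_nonneg: "Nf e r s \<ge> 0"
proof (cases "s \<le> 0")
  case True
  then have "s / e \<le> 1/4" "s / r \<le> 1/4" using e r_pos by (auto simp: divide_nonpos_pos)
  then show ?thesis by (simp add: Nf_def sig_0)
next
  case False then have "s / r \<le> s / e" using e er by (simp add: frac_le)
  then show ?thesis using sig_mono by (simp add: Nf_def mono_def)
qed

lemma Nf_le1: "Nf e r s \<le> 1"
  using sig_le1[of "s/e"] sig_nonneg[of "s/r"] by (simp add: Nf_def)

lemma df_pos: "df e s > 0"
proof -
  have a: "0 \<le> sig (8 * s / e)" "sig (8 * s / e) \<le> 1" using sig_nonneg sig_le1 by auto
  show ?thesis
  proof (cases "s \<le> 0")
    case True
    then have "8 * s / e \<le> 1/4" using e by (simp add: divide_nonpos_pos)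
    then show ?thesis by (simp add: df_def sig_0)
  next
    case False
    show ?thesis
    proof (cases "s \<le> 1")
      case True
      have "sig (8 * s / e) * s \<ge> 0" using a False by simp
      have "df e s = 1 - sig (8 * s / e) * (1 - s)" by (simp add: df_def algebra_simps)
      moreover have "sig (8 * s / e) * (1 - s) < 1"
      proof -
        have "sig (8 * s / e) * (1 - s) \<le> 1 * (1 - s)" using a True by (intro mult_right_mono) auto
        then show ?thesis using False by simp
      qed
      ultimately show ?thesis by simp
    next
      case False
      have "df e s = 1 + sig (8 * s / e) * (s - 1)" by (simp add: df_def algebra_simps)
      moreover have "sig (8 * s / e) * (s - 1) \<ge> 0" using a False by simp
      ultimately show ?thesis by simp
    qed
  qed
qed

lemma df_large: "s \<ge> e / 8 \<Longrightarrow> df e s = s"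
proof -
  assume "s \<ge> e / 8"
  then have "8 * s / e \<ge> 1" using e by (simp add: divide_simps)
  then show ?thesis by (simp add: df_def sig_1)
qed

lemma Gf_eq: "Gf e r s = Nf e r s / s"
proof (cases "s \<le> e / 4")
  case True then show ?thesis by (simp add: Gf_def Nf_zero_small)
next
  case False then have "df e s = s" using e by (intro df_large) simp
  then show ?thesis by (simp add: Gf_def divide_inverse)
qed

lemma Gf_nonneg: "Gf e r s \<ge> 0"
  using Nf_nonneg[of s] df_pos[of s] by (simp add: Gf_def)

lemma Gf_zero_large: "s \<ge> r \<Longrightarrow> Gf e r s = 0"
  by (simp add: Gf_def Nf_zero_large)

lemma Gf_le: "s > 0 \<Longrightarrow> Gf e r s \<le> 1 / s"
  using Nf_le1[of s] by (simp add: Gf_eq divide_right_mono)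

lemma Nf_A1: "Nf e r \<in> A1"
proof -
  have "(\<lambda>s. sig (s / e) - sig (s / r)) \<in> A1" by (intro A1_diff A1_aff' sig_A1)
  then show ?thesis by (simp add: Nf_def[abs_def])
qed

lemma df_A1: "df e \<in> A1"
proof -
  have s8: "(\<lambda>s. sig (s / (e/8))) \<in> A1" by (intro A1_aff' sig_A1)
  have h: "(\<lambda>s. sig (s / (e/8)) * s + (1 - sig (s / (e/8)))) \<in> A1"
    by (intro A1add A1mult A1_diff s8 A1i A1c)
  have eq: "(\<lambda>s. sig (s / (e/8)) * s + (1 - sig (s / (e/8)))) = df e"
    by (rule ext) (simp add: df_def mult.commute)
  show ?thesis using h unfolding eq .
qed

lemma Gf_A1: "Gf e r \<in> A1"
proof -
  have "(\<lambda>s. Nf e r s * inverse (df e s)) \<in> A1"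
    using df_pos by (intro A1mult A1inv Nf_A1 df_A1) (metis less_irrefl)
  then show ?thesis by (simp add: Gf_def[abs_def])
qed

lemma Gf_cont: "continuous_on S (Gf e r)" by (rule A1_cont[OF Gf_A1])

lemma Gf_int: "Gf e r integrable_on {a..b}"
  by (rule integrable_continuous_real[OF Gf_cont])

lemma Ff_zero_large: "s \<ge> r \<Longrightarrow> Ff e r s = 0"
proof -
  assume s: "s \<ge> r"
  have "(Gf e r has_integral 0) {s..r+1}"
    by (rule has_integral_is_0) (use s in \<open>auto intro: Gf_zero_large\<close>)
  then show ?thesis by (simp add: Ff_def integral_unique)
qed

lemma Ff_eq: "s \<le> r \<Longrightarrow> Ff e r s = integral {s..r} (Gf e r)"
proof -
  assume s: "s \<le> r"
  have "integral {s..r} (Gf e r) + integral {r..r+1} (Gf e r) = integral {s..r+1} (Gf e r)"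
    by (rule Henstock_Kurzweil_Integration.integral_combine[OF s _ Gf_int]) simp
  moreover have "integral {r..r+1} (Gf e r) = 0" using Ff_zero_large[of r] by (simp add: Ff_def)
  ultimately show ?thesis by (simp add: Ff_def)
qed

lemma Ff_deriv: "(Ff e r has_real_derivative - Gf e r s) (at s)"
proof (cases "s < r + 1")
  case True
  have "((\<lambda>x. integral {x..r+1} (Gf e r)) has_real_derivative - Gf e r s) (at s within {s-1..r+1})"
    using True by (intro integral_has_real_derivative' Gf_cont) auto
  then have "((\<lambda>x. integral {x..r+1} (Gf e r)) has_real_derivative - Gf e r s) (at s)"
    using True by (subst (asm) at_within_interior) auto
  then show ?thesis by (simp add: Ff_def[abs_def])
next
  case False
  have "((\<lambda>_. 0) has_real_derivative 0) (at s)" by simp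
  then have "(Ff e r has_real_derivative 0) (at s)"
    by (rule has_field_derivative_transform_within_open[where S="{r<..}"]) (use False r_pos in \<open>auto intro: Ff_zero_large\<close>)
  moreover have "Gf e r s = 0" using False by (intro Gf_zero_large) simp
  ultimately show ?thesis by simp
qed

lemma Ff_smooth: "smooth1 (Ff e r)"
proof (rule smooth1_closed[where S="insert (Ff e r) A1"])
  fix f assume f: "f \<in> insert (Ff e r) A1"
  show "(\<forall>x. f differentiable (at x)) \<and> deriv f \<in> insert (Ff e r) A1"
  proof (cases "f = Ff e r")
    case True
    have "deriv (Ff e r) = (\<lambda>s. (-1) * Gf e r s)" using Ff_deriv DERIV_imp_deriv by fastforce
    moreover have "(\<lambda>s. (-1) * Gf e r s) \<in> A1" by (intro A1mult A1c Gf_A1)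
    ultimately show ?thesis using True Ff_deriv real_differentiable_def by auto
  next
    case False
    then have "f \<in> A1" using f by simp
    then obtain f' where f': "f' \<in> A1" "\<forall>x. (f has_real_derivative f' x) (at x)" using A1_deriv by blast
    then have "deriv f = f'" using DERIV_imp_deriv by blast
    then show ?thesis using f' real_differentiable_def by auto
  qed
qed simp

lemma Ff_nonneg: "Ff e r s \<ge> 0"
proof (cases "s \<le> r")
  case True then show ?thesis by (simp add: Ff_eq integral_nonneg Gf_int Gf_nonneg)
next
  case False then show ?thesis by (simp add: Ff_zero_large)
qed

lemma Ff_le_ln: assumes "0 < s" "s \<le> r" shows "Ff e r s \<le> ln r - ln s"
proof -
  have dl: "\<forall>x\<in>{s..r}. (ln has_vector_derivative 1 / x) (at x within {s..r})"
    using assms by (auto intro!: derivative_eq_intros simp: has_real_derivative_iff_has_vector_derivative[symmetric])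
  have "((\<lambda>t. 1 / t) has_integral (ln r - ln s)) {s..r}"
    using fundamental_theorem_of_calculus[OF assms(2) dl[rule_format]] by simp
  then have "integral {s..r} (Gf e r) \<le> ln r - ln s"
    using assms by (intro has_integral_le[OF integrable_integral[OF Gf_int]]) (auto intro!: Gf_le)
  then show ?thesis using Ff_eq assms by simp
qed

lemma sG_eq_N: "(\<lambda>s. s * Gf e r s) = Nf e r"
proof
  fix s show "s * Gf e r s = Nf e r s"
    using e r_pos by (cases "s = 0") (simp_all add: Gf_eq Nf_zero_small less_imp_le)
qed

lemma Nf_deriv: "deriv (Nf e r) s = deriv sig (s / e) / e - deriv sig (s / r) / r"
proof -
  have "((\<lambda>s. sig (s / e) - sig (s / r)) has_real_derivative (deriv sig (s / e) * (1 / e) - deriv sig (s / r) * (1 / r))) (at s)"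
    using e r_pos by (intro derivative_intros DERIV_chain2[OF smooth1_DERIV[OF sig_smooth]]) (auto intro!: derivative_eq_intros)
  then show ?thesis by (intro DERIV_imp_deriv) (simp add: Nf_def[abs_def])
qed

lemma Ff_lap: "deriv (Ff e r) s + s * deriv (deriv (Ff e r)) s = - (deriv sig (s / e) / e - deriv sig (s / r) / r)"
proof -
  have dF: "deriv (Ff e r) = (\<lambda>s. - Gf e r s)" using Ff_deriv DERIV_imp_deriv by fastforce
  obtain G' where G': "\<forall>x. (Gf e r has_real_derivative G' x) (at x)" using A1_deriv[OF Gf_A1] by blast
  have ddF: "deriv (deriv (Ff e r)) s = - G' s" unfolding dF using G' by (intro DERIV_imp_deriv) (auto intro!: derivative_eq_intros)
  have "((\<lambda>s. s * Gf e r s) has_real_derivative (Gf e r s + s * G' s)) (at s)"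
    using G' by (auto intro!: derivative_eq_intros)
  then have "deriv (Nf e r) s = Gf e r s + s * G' s" unfolding sG_eq_N by (rule DERIV_imp_deriv)
  then show ?thesis using dF ddF Nf_deriv by simp
qed

end


lemma unit_ball_vol_2: "unit_ball_vol 2 = pi"
  using unit_ball_vol_even[of 1] by simp

lemma emeasure_ball_complex: "r \<ge> 0 \<Longrightarrow> emeasure lborel (ball (c::complex) r) = ennreal (pi * r\<^sup>2)"
  using emeasure_ball[of r c] by (simp add: unit_ball_vol_2)

lemma distr_negsq:
  "distr (lborel :: complex measure) borel (\<lambda>u. - (cmod u)\<^sup>2) = density lborel (\<lambda>s. ennreal pi * indicator {..0} s)"
  (is "?M1 = ?M2")
proof (rule measure_eqI_lessThan)
  show "sets ?M1 = sets borel" "sets ?M2 = sets borel" by auto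
  have M1: "emeasure ?M1 {x<..} = ennreal (pi * max 0 (- x))" for x
  proof -
    have "emeasure ?M1 {x<..} = emeasure lborel ((\<lambda>u::complex. - (cmod u)\<^sup>2) -` {x<..})"
      by (subst emeasure_distr) auto
    also have "\<dots> = ennreal (pi * max 0 (- x))"
    proof (cases "x < 0")
      case True
      have "cmod u < sqrt (- x) \<longleftrightarrow> (cmod u)\<^sup>2 < - x" for u :: complex
      proof -
        have "cmod u < sqrt (- x) \<longleftrightarrow> sqrt ((cmod u)\<^sup>2) < sqrt (- x)" by simp
        also have "\<dots> \<longleftrightarrow> (cmod u)\<^sup>2 < - x" by (rule real_sqrt_less_iff)
        finally show ?thesis .
      qed
      then have "(\<lambda>u::complex. - (cmod u)\<^sup>2) -` {x<..} = ball 0 (sqrt (- x))"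
        by (auto simp: dist_norm)
      then show ?thesis using True emeasure_ball_complex[of "sqrt (- x)" 0] by simp
    next
      case False
      have "(\<lambda>u::complex. - (cmod u)\<^sup>2) -` {x<..} = {}"
        using False by auto (smt (verit) zero_le_power2)
      then show ?thesis using False by simp
    qed
    finally show ?thesis .
  qed
  have M2: "emeasure ?M2 {x<..} = ennreal (pi * max 0 (- x))" for x
  proof -
    have "emeasure ?M2 {x<..} = (\<integral>\<^sup>+ s. ennreal pi * indicator {..0} s * indicator {x<..} s \<partial>lborel)"
      by (subst emeasure_density) auto
    also have "\<dots> = (\<integral>\<^sup>+ s. ennreal pi * indicator {x<..0} s \<partial>lborel)"
      by (intro nn_integral_cong) (auto split: split_indicator)
    also have "\<dots> = ennreal pi * emeasure lborel {x<..0}"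
      by (subst nn_integral_cmult_indicator) auto
    also have "\<dots> = ennreal (pi * max 0 (- x))"
      by (cases "x < 0") (auto simp: ennreal_mult[symmetric])
    finally show ?thesis .
  qed
  show "emeasure ?M1 {x<..} < \<infinity>" for x using M1 by simp
  show "emeasure ?M1 {x<..} = emeasure ?M2 {x<..}" for x using M1 M2 by simp
qed

lemma radial_nn_integral:
  fixes f :: "real \<Rightarrow> ennreal"
  assumes [measurable]: "f \<in> borel_measurable borel"
  shows "(\<integral>\<^sup>+ u. f ((cmod (u::complex))\<^sup>2) \<partial>lborel) = ennreal pi * (\<integral>\<^sup>+ s. f s * indicator {0..} s \<partial>lborel)"
proof -
  have "(\<integral>\<^sup>+ u. f ((cmod (u::complex))\<^sup>2) \<partial>lborel) = (\<integral>\<^sup>+ u. f (- (- (cmod (u::complex))\<^sup>2)) \<partial>lborel)" by simp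
  also have "\<dots> = (\<integral>\<^sup>+ s. f (- s) \<partial>distr (lborel :: complex measure) borel (\<lambda>u. - (cmod u)\<^sup>2))"
    by (subst nn_integral_distr) auto
  also have "\<dots> = (\<integral>\<^sup>+ s. f (- s) \<partial>density lborel (\<lambda>s. ennreal pi * indicator {..0} s))"
    by (simp only: distr_negsq)
  also have "\<dots> = (\<integral>\<^sup>+ s. ennreal pi * (indicator {..0} s * f (- s)) \<partial>lborel)"
    by (subst nn_integral_density) (auto simp: mult_ac)
  also have "\<dots> = ennreal pi * (\<integral>\<^sup>+ s. indicator {..0} s * f (- s) \<partial>lborel)"
    by (subst nn_integral_cmult) auto
  also have "(\<integral>\<^sup>+ s. indicator {..0} s * f (- s) \<partial>lborel) = (\<integral>\<^sup>+ s. f s * indicator {0..} s \<partial>distr lborel borel uminus)"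
    by (subst nn_integral_distr) (auto intro!: nn_integral_cong simp: mult.commute split: split_indicator)
  also have "\<dots> = (\<integral>\<^sup>+ s. f s * indicator {0..} s \<partial>lborel)" by (simp only: lborel_distr_uminus)
  finally show ?thesis .
qed


lemma sig_deriv_cont: "continuous_on S (deriv sig)"
proof -
  have "\<forall>x. (deriv ^^ Suc 0) sig differentiable (at x)" using sig_smooth unfolding smooth1_def by blast
  then have "\<forall>x. deriv sig differentiable (at x)" by simp
  then show ?thesis by (meson continuous_at_imp_continuous_on differentiable_imp_continuous_within)
qed

lemma sig_deriv_bound: "\<exists>M>0. \<forall>x. \<bar>deriv sig x\<bar> \<le> M"
proof -
  have "compact (deriv sig ` {0..1})" by (intro compact_continuous_image sig_deriv_cont) auto
  then obtain M where M: "M > 0" "\<forall>y\<in>deriv sig ` {0..1}. norm y \<le> M"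
    using compact_imp_bounded bounded_pos by metis
  have "\<bar>deriv sig x\<bar> \<le> M" for x
  proof (cases "x \<in> {0..1}")
    case True then show ?thesis using M by auto
  next
    case False then have "deriv sig x = 0" by (intro sig_deriv_zero) auto
    then show ?thesis using M by simp
  qed
  then show ?thesis using M by auto
qed

lemma q_eq: "(Re w - Re z)\<^sup>2 + (Im w - Im z)\<^sup>2 = (cmod (w - z))\<^sup>2"
  by (simp add: cmod_power2)

lemma int_A:
  assumes e: "e > 0"
  shows "(\<integral>\<^sup>+w. ennreal (deriv sig ((cmod (w - z))\<^sup>2 / e) / e) \<partial>lborel) = ennreal pi"
proof -
  define g where "g = (\<lambda>s. ennreal (deriv sig (s / e) / e))"
  have gm[measurable]: "g \<in> borel_measurable borel"
  proof -
    have "continuous_on UNIV (\<lambda>s. deriv sig (s / e) / e)"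
      using e by (intro continuous_intros continuous_on_compose2[OF sig_deriv_cont]) auto
    then have [measurable]: "(\<lambda>s. deriv sig (s / e) / e) \<in> borel_measurable borel"
      by (rule borel_measurable_continuous_onI)
    show ?thesis unfolding g_def by measurable
  qed
  have "(\<integral>\<^sup>+w. g ((cmod (w - z))\<^sup>2) \<partial>lborel) = (\<integral>\<^sup>+w. g ((cmod (w - z))\<^sup>2) \<partial>distr lborel borel ((+) z))"
    by (rule arg_cong[where f = "\<lambda>M. \<integral>\<^sup>+w. g ((cmod (w - z))\<^sup>2) \<partial>M"]) (rule lborel_distr_plus[symmetric])
  also have "\<dots> = (\<integral>\<^sup>+u. g ((cmod u)\<^sup>2) \<partial>lborel)"
    by (subst nn_integral_distr) auto
  also have "\<dots> = ennreal pi * (\<integral>\<^sup>+ s. g s * indicator {0..} s \<partial>lborel)"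
    by (rule radial_nn_integral[OF gm])
  also have "(\<integral>\<^sup>+ s. g s * indicator {0..} s \<partial>lborel) = (\<integral>\<^sup>+ s. ennreal (deriv sig (s / e) / e) * indicator {0..e} s \<partial>lborel)"
  proof (rule nn_integral_cong)
    fix s :: real
    show "g s * indicator {0..} s = ennreal (deriv sig (s / e) / e) * indicator {0..e} s"
    proof (cases "s > e")
      case True then have "deriv sig (s / e) = 0" using e by (intro sig_deriv_zero) auto
      then show ?thesis using True by (simp add: g_def indicator_def)
    qed (auto simp: g_def indicator_def)
  qed
  also have "\<dots> = ennreal (sig (e / e) - sig (0 / e))"
  proof (rule nn_integral_FTC_Icc)
    show "(\<lambda>s. deriv sig (s / e) / e) \<in> borel_measurable borel"
      using e by (intro borel_measurable_continuous_onI continuous_intros continuous_on_compose2[OF sig_deriv_cont]) auto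
    fix x assume "x \<in> {0..e}"
    show "((\<lambda>s. sig (s / e)) has_real_derivative deriv sig (x / e) / e) (at x)"
    proof -
      have "((\<lambda>s. s / e) has_real_derivative 1 / e) (at x)" using e by (auto intro!: derivative_eq_intros)
      from DERIV_chain2[OF smooth1_DERIV[OF sig_smooth] this] show ?thesis by simp
    qed
    show "0 \<le> deriv sig (x / e) / e" using e sig_deriv_nonneg by simp
  qed (use e in simp)
  also have "sig (e / e) - sig (0 / e) = 1" using e sig_0 sig_1 by simp
  finally show ?thesis by (simp add: g_def)
qed


lemma ennreal_integral_le_nn:
  fixes f :: "'a \<Rightarrow> real"
  assumes "\<And>x. 0 \<le> f x"
  shows "ennreal (integral\<^sup>L M f) \<le> (\<integral>\<^sup>+x. ennreal (f x) \<partial>M)"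
proof (cases "integrable M f")
  case True
  have "(\<integral>\<^sup>+x. ennreal (f x) \<partial>M) = ennreal (integral\<^sup>L M f)"
    by (rule nn_integral_eq_integral[OF True]) (simp add: assms)
  then show ?thesis by simp
next
  case False then show ?thesis by (simp add: not_integrable_integral_eq)
qed

definition kz :: "complex \<Rightarrow> real \<Rightarrow> complex \<Rightarrow> ennreal" where
  "kz z R w = (if w = z then \<infinity> else ennreal (max 0 (ln R - ln (cmod (w - z)))))"

definition Jz :: "(complex \<Rightarrow> ereal) \<Rightarrow> complex \<Rightarrow> real \<Rightarrow> real" where
  "Jz \<phi> z R = 4 * (\<integral>w. real_of_ereal (\<phi> w) * (deriv sig ((cmod (w - z))\<^sup>2 / R\<^sup>2) / R\<^sup>2) \<partial>lborel)"

lemma usc_ball: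
  assumes "open U" "usc_on U \<phi>" "z \<in> U" "\<phi> z < ereal c"
  obtains d where "d > 0" "\<And>w. dist w z < d \<Longrightarrow> \<phi> w < ereal c"
proof -
  have "\<forall>\<^sub>F w in at z within U. \<phi> w < ereal c"
    using assms(2)[unfolded usc_on_def, rule_format, OF assms(3) assms(4)] .
  then have "\<forall>\<^sub>F w in at z. \<phi> w < ereal c" by (simp add: at_within_open[OF assms(3) assms(1)])
  then obtain d where d: "d > 0" "\<forall>w. w \<noteq> z \<and> dist w z < d \<longrightarrow> \<phi> w < ereal c"
    unfolding eventually_at by auto
  have h: "\<phi> w < ereal c" if "dist w z < d" for w
  proof (cases "w = z")
    case True then show ?thesis using assms(4) by simp
  next
    case False then show ?thesis using d(2) that by blast
  qed
  show ?thesis using that[OF d(1) h] by blast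
qed

lemma integrable_bounded_mult:
  fixes f g :: "complex \<Rightarrow> real"
  assumes f: "integrable lborel f" and g: "continuous_on UNIV g" and b: "\<And>x. \<bar>g x\<bar> \<le> B"
  shows "integrable lborel (\<lambda>x. f x * g x)"
proof -
  have "B \<ge> 0" using b[of 0] by simp
  have [measurable]: "g \<in> borel_measurable borel" using g by (rule borel_measurable_continuous_onI)
  have [measurable]: "f \<in> borel_measurable borel" using borel_measurable_integrable[OF f] by simp
  have i: "integrable lborel (\<lambda>x. B * f x)" using f by simp
  have m: "(\<lambda>x. f x * g x) \<in> borel_measurable lborel" by measurable
  have a: "AE x in lborel. norm (f x * g x) \<le> norm (B * f x)"
  proof (intro AE_I2)
    fix x
    have "\<bar>f x\<bar> * \<bar>g x\<bar> \<le> \<bar>f x\<bar> * B" using b[of x] by (intro mult_left_mono) auto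
    then show "norm (f x * g x) \<le> norm (B * f x)" using \<open>B \<ge> 0\<close> by (simp add: abs_mult mult.commute)
  qed
  show ?thesis by (rule Bochner_Integration.integrable_bound[OF i m a])
qed

context
  fixes U :: "complex set" and \<phi> :: "complex \<Rightarrow> ereal" and \<nu> :: "complex measure"
  assumes U: "open U" and usc: "usc_on U \<phi>" and fin: "\<forall>z\<in>U. \<phi> z < \<infinity>"
    and dl: "distr_laplacian_on U \<phi> \<nu>"
begin

lemma core:
  assumes z: "z \<in> U" and R: "R > 0" and RU: "cball z R \<subseteq> U" and c: "\<phi> z < ereal c"
  shows "ennreal (Jz \<phi> z R - 4 * pi * c) \<le> (\<integral>\<^sup>+w. 2 * kz z R w \<partial>\<nu>)"
proof -
  define phr where "phr = (\<lambda>w. real_of_ereal (\<phi> w))"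
  obtain d where d: "d > 0" "\<And>w. dist w z < d \<Longrightarrow> \<phi> w < ereal c"
    using usc_ball[OF U usc z c] by blast
  define \<epsilon> where "\<epsilon> = min (d/2) R"
  have \<epsilon>: "\<epsilon> > 0" "\<epsilon> \<le> R" "\<epsilon> < d" using d R by (auto simp: \<epsilon>_def)
  define e where "e = \<epsilon>\<^sup>2"
  define r where "r = R\<^sup>2"
  have e: "e > 0" "e \<le> r" using \<epsilon> by (auto simp: e_def r_def power_mono)
  have r: "r > 0" using R by (simp add: r_def)
  define \<psi> where "\<psi> = (\<lambda>w. Ff e r ((Re w - Re z)\<^sup>2 + (Im w - Im z)\<^sup>2))"
  have \<psi>_eq: "\<psi> w = Ff e r ((cmod (w - z))\<^sup>2)" for w by (simp add: \<psi>_def q_eq)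
  define A where "A = (\<lambda>w. deriv sig ((cmod (w - z))\<^sup>2 / e) / e)"
  define Bk where "Bk = (\<lambda>w. deriv sig ((cmod (w - z))\<^sup>2 / r) / r)"
  obtain Ms where Ms: "Ms > 0" "\<And>x. \<bar>deriv sig x\<bar> \<le> Ms" using sig_deriv_bound by blast

  have smooth: "smooth_fun \<psi>" unfolding \<psi>_def by (intro B2_smooth B2q Ff_smooth e)
  have supp0: "{x. \<psi> x \<noteq> 0} \<subseteq> ball z R"
  proof
    fix x assume "x \<in> {x. \<psi> x \<noteq> 0}"
    then have "\<not> (cmod (x - z))\<^sup>2 \<ge> r" using Ff_zero_large[OF e] by (auto simp: \<psi>_eq)
    then have "(cmod (x - z))\<^sup>2 < R\<^sup>2" by (simp add: r_def)
    then have "cmod (x - z) < R" using R by (simp add: power_less_imp_less_base)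
    then show "x \<in> ball z R" by (simp add: dist_norm norm_minus_commute)
  qed
  have supp: "tsupport \<psi> \<subseteq> cball z R"
    unfolding tsupport_def using supp0 by (intro closure_minimal) auto
  have "compact (tsupport \<psi>)"
    unfolding compact_eq_bounded_closed using bounded_subset[OF bounded_cball supp]
    by (simp add: tsupport_def)
  then have test: "test_fun U \<psi>"
    unfolding test_fun_def using smooth supp RU by auto
  have lap: "laplacian \<psi> w = - 4 * A w + 4 * Bk w" for w
  proof -
    have "laplacian \<psi> w = 4 * (deriv (Ff e r) ((Re w - Re z)\<^sup>2 + (Im w - Im z)\<^sup>2) + ((Re w - Re z)\<^sup>2 + (Im w - Im z)\<^sup>2) * deriv (deriv (Ff e r)) ((Re w - Re z)\<^sup>2 + (Im w - Im z)\<^sup>2))"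
      unfolding \<psi>_def by (rule laplacian_Fq[OF Ff_smooth[OF e]])
    also have "\<dots> = 4 * (deriv (Ff e r) ((cmod (w - z))\<^sup>2) + (cmod (w - z))\<^sup>2 * deriv (deriv (Ff e r)) ((cmod (w - z))\<^sup>2))"
      by (simp only: q_eq)
    also have "\<dots> = - 4 * A w + 4 * Bk w" unfolding Ff_lap[OF e] A_def Bk_def by simp
    finally show ?thesis .
  qed
  note dlu = dl[unfolded distr_laplacian_on_def]
  have ident: "(\<integral>w. phr w * laplacian \<psi> w \<partial>lborel) = (\<integral>w. \<psi> w \<partial>\<nu>)"
    unfolding phr_def using dlu[THEN conjunct2, THEN conjunct2, THEN conjunct2, THEN conjunct2, THEN conjunct2, rule_format, OF test] .

  have intK: "integrable lborel (\<lambda>w. indicator (cball z R) w * phr w)"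
    using dlu[THEN conjunct2, THEN conjunct2, THEN conjunct2, THEN conjunct2, THEN conjunct1, rule_format, of "cball z R"] RU
    unfolding set_integrable_def phr_def by (simp add: compact_cball)
  have contA: "continuous_on UNIV A"
    unfolding A_def using e by (intro continuous_intros continuous_on_compose2[OF sig_deriv_cont]) auto
  have contB: "continuous_on UNIV Bk"
    unfolding Bk_def using r by (intro continuous_intros continuous_on_compose2[OF sig_deriv_cont]) auto
  have A_zero: "A w = 0" if "w \<notin> ball z \<epsilon>" for w
  proof -
    have "\<epsilon> \<le> cmod (w - z)" using that by (simp add: dist_norm norm_minus_commute)
    then have "e \<le> (cmod (w - z))\<^sup>2" unfolding e_def using \<epsilon> by (intro power_mono) auto
    then have "(cmod (w - z))\<^sup>2 / e \<ge> 1" using e by simp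
    then show ?thesis unfolding A_def by (simp add: sig_deriv_zero)
  qed
  have B_zero: "Bk w = 0" if "w \<notin> cball z R" for w
  proof -
    have "R \<le> cmod (w - z)" using that by (simp add: dist_norm norm_minus_commute)
    then have "r \<le> (cmod (w - z))\<^sup>2" unfolding r_def using R by (intro power_mono) auto
    then have "(cmod (w - z))\<^sup>2 / r \<ge> 1" using r by simp
    then show ?thesis unfolding Bk_def by (simp add: sig_deriv_zero)
  qed
  have A_nonneg: "A w \<ge> 0" for w unfolding A_def using e sig_deriv_nonneg by simp
  have A_bound: "\<bar>A w\<bar> \<le> Ms / e" for w unfolding A_def using e Ms(2) by (simp add: divide_right_mono)
  have B_bound: "\<bar>Bk w\<bar> \<le> Ms / r" for w unfolding Bk_def using r Ms(2) by (simp add: divide_right_mono)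
  have ballK: "ball z \<epsilon> \<subseteq> cball z R" using \<epsilon> by auto
  have eqA: "phr w * A w = (indicator (cball z R) w * phr w) * A w" for w
  proof (cases "w \<in> cball z R")
    case False then have "w \<notin> ball z \<epsilon>" using ballK by auto
    then show ?thesis using A_zero False by simp
  qed simp
  have eqB: "phr w * Bk w = (indicator (cball z R) w * phr w) * Bk w" for w
    using B_zero by (cases "w \<in> cball z R") auto
  have intA: "integrable lborel (\<lambda>w. phr w * A w)"
    unfolding eqA by (rule integrable_bounded_mult[OF intK contA A_bound])
  have intB: "integrable lborel (\<lambda>w. phr w * Bk w)"
    unfolding eqB by (rule integrable_bounded_mult[OF intK contB B_bound])

  have nnA: "(\<integral>\<^sup>+w. ennreal (A w) \<partial>lborel) = ennreal pi" unfolding A_def by (rule int_A[OF e(1)])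
  have AmeasB[measurable]: "A \<in> borel_measurable borel" using contA by (rule borel_measurable_continuous_onI)
  have intAA: "integrable lborel A"
    by (rule integrableI_nn_integral_finite[OF _ _ nnA]) (auto simp: A_nonneg)
  have intA_val: "(\<integral>w. A w \<partial>lborel) = pi"
  proof -
    have "ennreal (\<integral>w. A w \<partial>lborel) = ennreal pi"
      using nn_integral_eq_integral[OF intAA] A_nonneg nnA by simp
    moreover have "(\<integral>w. A w \<partial>lborel) \<ge> 0" by (intro integral_nonneg_AE) (simp add: A_nonneg)
    ultimately show ?thesis using pi_gt_zero ennreal_inj by (metis less_eq_real_def)
  qed

  have AE_le: "AE w in lborel. phr w * A w \<le> c * A w"
  proof -
    have "AE w in lborel. w \<in> U \<longrightarrow> \<phi> w \<noteq> - \<infinity>" using dlu[THEN conjunct2, THEN conjunct2, THEN conjunct2, THEN conjunct1] .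
    then show ?thesis
    proof (rule AE_mp, intro AE_I2 impI)
      fix w assume h: "w \<in> U \<longrightarrow> \<phi> w \<noteq> - \<infinity>"
      show "phr w * A w \<le> c * A w"
      proof (cases "w \<in> ball z \<epsilon>")
        case False then show ?thesis using A_zero by simp
      next
        case True
        then have "w \<in> U" using ballK RU by auto
        have "dist w z < d" using True \<epsilon> by (simp add: dist_commute)
        then have "\<phi> w < ereal c" by (rule d(2))
        moreover have "\<phi> w \<noteq> - \<infinity>" using h \<open>w \<in> U\<close> by simp
        ultimately have "phr w \<le> c" unfolding phr_def by (cases "\<phi> w") auto
        then show ?thesis using A_nonneg by (intro mult_right_mono) auto
      qed
    qed
  qed
  have le1: "(\<integral>w. phr w * A w \<partial>lborel) \<le> c * pi"
  proof -
    have "(\<integral>w. phr w * A w \<partial>lborel) \<le> (\<integral>w. c * A w \<partial>lborel)"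
      by (rule integral_mono_AE[OF intA _ AE_le]) (simp add: intAA)
    also have "\<dots> = c * pi" using intA_val by simp
    finally show ?thesis .
  qed
  have split: "(\<integral>w. phr w * laplacian \<psi> w \<partial>lborel) = - 4 * (\<integral>w. phr w * A w \<partial>lborel) + Jz \<phi> z R"
  proof -
    have "(\<integral>w. phr w * laplacian \<psi> w \<partial>lborel) = (\<integral>w. (- 4) * (phr w * A w) + 4 * (phr w * Bk w) \<partial>lborel)"
      unfolding lap by (simp add: algebra_simps)
    also have "\<dots> = - 4 * (\<integral>w. phr w * A w \<partial>lborel) + 4 * (\<integral>w. phr w * Bk w \<partial>lborel)"
      using intA intB by simp
    also have "4 * (\<integral>w. phr w * Bk w \<partial>lborel) = Jz \<phi> z R"
      unfolding Jz_def Bk_def phr_def r_def ..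
    finally show ?thesis .
  qed
  have main: "Jz \<phi> z R - 4 * pi * c \<le> (\<integral>w. \<psi> w \<partial>\<nu>)"
    using ident split le1 by (simp add: algebra_simps)

  have psi_nonneg: "\<psi> w \<ge> 0" for w unfolding \<psi>_def by (rule Ff_nonneg[OF e])
  have psi_le: "ennreal (\<psi> w) \<le> 2 * kz z R w" for w
  proof (cases "w = z")
    case True then show ?thesis by (simp add: kz_def)
  next
    case False
    then have pos: "cmod (w - z) > 0" by simp
    show ?thesis
    proof (cases "(cmod (w - z))\<^sup>2 \<ge> r")
      case True then show ?thesis using Ff_zero_large[OF e] by (simp add: \<psi>_eq)
    next
      case False
      have "\<psi> w \<le> ln r - ln ((cmod (w - z))\<^sup>2)"
        unfolding \<psi>_eq using False pos by (intro Ff_le_ln[OF e]) auto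
      also have "\<dots> = 2 * (ln R - ln (cmod (w - z)))"
        using R pos by (simp add: r_def ln_realpow)
      also have "\<dots> \<le> 2 * max 0 (ln R - ln (cmod (w - z)))" by (intro mult_left_mono) auto
      finally have "\<psi> w \<le> 2 * max 0 (ln R - ln (cmod (w - z)))" .
      then have "ennreal (\<psi> w) \<le> ennreal (2 * max 0 (ln R - ln (cmod (w - z))))"
        by (rule ennreal_leI)
      also have "\<dots> = 2 * kz z R w" using \<open>w \<noteq> z\<close> by (simp add: kz_def ennreal_mult)
      finally show ?thesis .
    qed
  qed
  have "ennreal (Jz \<phi> z R - 4 * pi * c) \<le> ennreal (\<integral>w. \<psi> w \<partial>\<nu>)"
    using main by (rule ennreal_leI)
  also have "\<dots> \<le> (\<integral>\<^sup>+w. ennreal (\<psi> w) \<partial>\<nu>)" by (rule ennreal_integral_le_nn[OF psi_nonneg])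
  also have "\<dots> \<le> (\<integral>\<^sup>+w. 2 * kz z R w \<partial>\<nu>)" by (intro nn_integral_mono psi_le)
  finally show ?thesis .
qed

end


definition eexp :: "ennreal \<Rightarrow> ennreal" where
  "eexp x = (if x = \<infinity> then \<infinity> else ennreal (exp (enn2real x)))"

lemma eexp_ge: "x \<le> eexp x"
proof (cases "x = \<infinity>")
  case False
  then obtain r where r: "x = ennreal r" "r \<ge> 0" by (cases x) auto
  have "r \<le> exp r" using exp_ge_add_one_self[of r] by linarith
  then show ?thesis using r by (simp add: eexp_def ennreal_leI)
qed (simp add: eexp_def)

lemma eexp_mono: "mono eexp"
proof (rule monoI)
  fix x y :: ennreal assume "x \<le> y"
  then show "eexp x \<le> eexp y"
    by (cases x; cases y) (auto simp: eexp_def ennreal_leI top_unique)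
qed

lemma eexp_measurable[measurable]: "eexp \<in> borel_measurable borel"
  unfolding eexp_def[abs_def] by measurable

lemma jensen_eexp:
  assumes fin: "emeasure Q (space Q) = ennreal M" and M: "M > 0"
    and f[measurable]: "f \<in> borel_measurable Q"
  shows "eexp ((\<integral>\<^sup>+x. f x \<partial>Q) / ennreal M) \<le> (\<integral>\<^sup>+x. eexp (f x) \<partial>Q) / ennreal M"
proof (cases "(\<integral>\<^sup>+x. f x \<partial>Q) = \<infinity>")
  case True
  have "(\<integral>\<^sup>+x. f x \<partial>Q) \<le> (\<integral>\<^sup>+x. eexp (f x) \<partial>Q)" by (intro nn_integral_mono eexp_ge)
  then have "(\<integral>\<^sup>+x. eexp (f x) \<partial>Q) = \<infinity>" using True by (simp add: top_unique)
  then show ?thesis using True M by (simp add: eexp_def ennreal_top_divide)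
next
  case False
  then obtain I where I: "(\<integral>\<^sup>+x. f x \<partial>Q) = ennreal I" "I \<ge> 0"
    by (cases "(\<integral>\<^sup>+x. f x \<partial>Q)") auto
  define a where "a = I / M"
  have a: "a \<ge> 0" using I M by (simp add: a_def)
  have pw: "ennreal (exp a) * (1 + f x) \<le> eexp (f x) + ennreal (exp a * a)" for x
  proof (cases "f x = \<infinity>")
    case True then show ?thesis by (simp add: eexp_def)
  next
    case False
    then obtain y where y: "f x = ennreal y" "y \<ge> 0" by (cases "f x") auto
    have "exp a * (1 + (y - a)) \<le> exp a * exp (y - a)"
      using exp_ge_add_one_self[of "y - a"] by (intro mult_left_mono) auto
    also have "exp a * exp (y - a) = exp y" by (simp add: exp_add[symmetric])
    finally have "exp a * (1 + y) \<le> exp y + exp a * a" by (simp add: algebra_simps)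
    then have "ennreal (exp a * (1 + y)) \<le> ennreal (exp y + exp a * a)" by (rule ennreal_leI)
    moreover have "ennreal (exp a * (1 + y)) = ennreal (exp a) * (1 + f x)"
      using y by (simp add: ennreal_mult ennreal_plus)
    moreover have "ennreal (exp y + exp a * a) = eexp (f x) + ennreal (exp a * a)"
      using y a by (simp add: eexp_def ennreal_plus)
    ultimately show ?thesis by simp
  qed
  have "(\<integral>\<^sup>+x. ennreal (exp a) * (1 + f x) \<partial>Q) \<le> (\<integral>\<^sup>+x. eexp (f x) + ennreal (exp a * a) \<partial>Q)"
    by (intro nn_integral_mono pw)
  also have "\<dots> = (\<integral>\<^sup>+x. eexp (f x) \<partial>Q) + ennreal (exp a * a) * ennreal M"
    using fin by (simp add: nn_integral_add nn_integral_const)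
  finally have h: "(\<integral>\<^sup>+x. ennreal (exp a) * (1 + f x) \<partial>Q) \<le> (\<integral>\<^sup>+x. eexp (f x) \<partial>Q) + ennreal (exp a * a) * ennreal M" .
  have "(\<integral>\<^sup>+x. ennreal (exp a) * (1 + f x) \<partial>Q) = ennreal (exp a) * (ennreal M + ennreal I)"
    using fin I by (simp add: nn_integral_cmult nn_integral_add)
  also have "\<dots> = ennreal (exp a * M) + ennreal (exp a * a) * ennreal M"
    using M I a by (simp add: a_def ennreal_mult[symmetric] ennreal_plus[symmetric] algebra_simps del: ennreal_plus)
  finally have "ennreal (exp a * M) + ennreal (exp a * a) * ennreal M \<le> (\<integral>\<^sup>+x. eexp (f x) \<partial>Q) + ennreal (exp a * a) * ennreal M"
    using h by simp
  then have "ennreal (exp a * a) * ennreal M + ennreal (exp a * M) \<le> ennreal (exp a * a) * ennreal M + (\<integral>\<^sup>+x. eexp (f x) \<partial>Q)"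
    by (simp add: add.commute)
  moreover have "ennreal (exp a * a) * ennreal M \<noteq> \<infinity>" by (simp add: ennreal_mult_eq_top_iff)
  ultimately have h2: "ennreal (exp a * M) \<le> (\<integral>\<^sup>+x. eexp (f x) \<partial>Q)"
    using ennreal_add_left_cancel_le by blast
  have "eexp ((\<integral>\<^sup>+x. f x \<partial>Q) / ennreal M) = ennreal (exp a)"
    using I M a by (simp add: eexp_def a_def divide_ennreal)
  also have "\<dots> = ennreal (exp a * M) / ennreal M" using M by (simp add: divide_ennreal)
  also have "\<dots> \<le> (\<integral>\<^sup>+x. eexp (f x) \<partial>Q) / ennreal M" by (intro divide_right_mono_ennreal h2)
  finally show ?thesis .
qed


definition Pk :: "real \<Rightarrow> real \<Rightarrow> ennreal" where
  "Pk m \<rho> = (if \<rho> = 0 then \<infinity> else ennreal (\<rho> powr (- m)))"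

lemma Pk_measurable[measurable]: "Pk m \<in> borel_measurable borel"
  unfolding Pk_def[abs_def] by measurable

lemma Pk_le1: "\<rho> \<ge> 1 \<Longrightarrow> m \<ge> 0 \<Longrightarrow> Pk m \<rho> \<le> 1"
proof -
  assume h: "\<rho> \<ge> 1" "m \<ge> 0"
  have "1 \<le> \<rho> powr m" using h by (intro ge_one_powr_ge_zero) auto
  then have "\<rho> powr (- m) \<le> 1" using h by (simp add: powr_minus divide_simps)
  then show ?thesis using h by (simp add: Pk_def ennreal_leI)
qed

lemma Pk_antimono: "0 \<le> \<rho>1 \<Longrightarrow> \<rho>1 \<le> \<rho>2 \<Longrightarrow> m \<ge> 0 \<Longrightarrow> Pk m \<rho>2 \<le> Pk m \<rho>1"
proof -
  assume h: "0 \<le> \<rho>1" "\<rho>1 \<le> \<rho>2" "m \<ge> 0"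
  show ?thesis
  proof (cases "\<rho>1 = 0")
    case True then show ?thesis by (simp add: Pk_def)
  next
    case False
    then have "\<rho>1 > 0" "\<rho>2 > 0" using h by auto
    then have "\<rho>2 powr (- m) \<le> \<rho>1 powr (- m)" using h by (intro powr_mono2') auto
    then show ?thesis using \<open>\<rho>1 > 0\<close> \<open>\<rho>2 > 0\<close> by (simp add: Pk_def ennreal_leI)
  qed
qed

lemma eexp_kernel:
  assumes m: "m > 0" and R: "R > 0"
  shows "eexp (ennreal m * (if w = z then \<infinity> else ennreal (max 0 (ln R - ln (cmod (w - z))))))
     \<le> 1 + ennreal (R powr m) * Pk m (cmod (w - z))"
proof (cases "w = z")
  case True
  have "ennreal (R powr m) * \<infinity> = \<infinity>" using R by (simp add: ennreal_mult_top)
  then show ?thesis using True m by (simp add: eexp_def Pk_def ennreal_mult_top)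
next
  case False
  define \<rho> where "\<rho> = cmod (w - z)"
  have \<rho>: "\<rho> > 0" using False by (simp add: \<rho>_def)
  have "exp (m * max 0 (ln R - ln \<rho>)) \<le> 1 + exp (m * (ln R - ln \<rho>))"
    by (cases "0 \<le> ln R - ln \<rho>") (auto simp: max_def)
  also have "exp (m * (ln R - ln \<rho>)) = R powr m * \<rho> powr (- m)"
    using R \<rho> by (simp add: powr_def exp_diff exp_minus algebra_simps exp_add[symmetric] divide_inverse)
  finally have *: "exp (m * max 0 (ln R - ln \<rho>)) \<le> 1 + R powr m * \<rho> powr (- m)" .
  have "eexp (ennreal m * ennreal (max 0 (ln R - ln \<rho>))) = ennreal (exp (m * max 0 (ln R - ln \<rho>)))"
    using m by (simp add: eexp_def ennreal_mult[symmetric])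
  also have "\<dots> \<le> ennreal (1 + R powr m * \<rho> powr (- m))" using * by (rule ennreal_leI)
  also have "\<dots> = 1 + ennreal (R powr m) * Pk m \<rho>" using \<rho> by (simp add: Pk_def ennreal_mult ennreal_plus)
  finally show ?thesis using False by (simp add: \<rho>_def)
qed

lemma Pk_int01:
  assumes m: "0 < m" "m < 1"
  shows "(\<integral>\<^sup>+s. Pk m s * indicator {0..1} s \<partial>lborel) = ennreal (1 / (1 - m))"
proof -
  have "(\<integral>\<^sup>+s. Pk m s * indicator {0..1} s \<partial>lborel) = (\<integral>\<^sup>+s. ennreal (indicator {0..1} s * s powr (- m)) \<partial>lborel)"
  proof (rule nn_integral_cong_AE)
    show "AE s in lborel. Pk m s * indicator {0..1} s = ennreal (indicator {0..1} s * s powr (- m))"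
      using AE_lborel_singleton[of 0] by eventually_elim (auto simp: Pk_def indicator_def)
  qed
  also have "\<dots> = ennreal (1 powr (- m + 1) / (- m + 1))"
    by (rule nn_integral_has_integral_lebesgue) (use has_integral_powr_from_0[of "- m" 1] m in auto)
  finally show ?thesis by simp
qed

lemma Pk_int_line:
  assumes m: "0 < m" "m < 1"
  shows "(\<integral>\<^sup>+t. Pk m \<bar>x - t\<bar> * indicator {a..b} t \<partial>lborel) \<le> ennreal (2 / (1 - m) + \<bar>b - a\<bar>)"
proof -
  define g where "g = (\<lambda>s. Pk m s * indicator {0..1} s)"
  have gm[measurable]: "g \<in> borel_measurable borel" unfolding g_def by measurable
  have pw: "Pk m \<bar>x - t\<bar> * indicator {a..b} t \<le> (g (t - x) + g (x - t)) + indicator {a..b} t" for t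
  proof (cases "\<bar>x - t\<bar> \<le> 1")
    case True
    then show ?thesis unfolding g_def
      by (cases "t \<ge> x") (auto simp: indicator_def abs_if add.commute add_increasing2 split: if_splits)
  next
    case False
    then have "Pk m \<bar>x - t\<bar> \<le> 1" using m by (intro Pk_le1) auto
    then have "Pk m \<bar>x - t\<bar> * indicator {a..b} t \<le> indicator {a..b} t"
      by (auto simp: indicator_def)
    then show ?thesis by (simp add: add_increasing)
  qed
  have "(\<integral>\<^sup>+t. Pk m \<bar>x - t\<bar> * indicator {a..b} t \<partial>lborel) \<le> (\<integral>\<^sup>+t. (g (t - x) + g (x - t)) + indicator {a..b} t \<partial>lborel)"
    by (intro nn_integral_mono pw)
  also have "\<dots> = (\<integral>\<^sup>+t. g (t - x) \<partial>lborel) + (\<integral>\<^sup>+t. g (x - t) \<partial>lborel) + emeasure lborel {a..b}"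
    by (simp add: nn_integral_add)
  also have "(\<integral>\<^sup>+t. g (t - x) \<partial>lborel) = (\<integral>\<^sup>+t. g t \<partial>lborel)"
    using nn_integral_real_affine[OF gm, of 1 "- x"] by simp
  also have "(\<integral>\<^sup>+t. g (x - t) \<partial>lborel) = (\<integral>\<^sup>+t. g t \<partial>lborel)"
    using nn_integral_real_affine[OF gm, of "-1" x] by simp
  also have "(\<integral>\<^sup>+t. g t \<partial>lborel) = ennreal (1 / (1 - m))" unfolding g_def by (rule Pk_int01[OF m])
  also have "emeasure lborel {a..b} \<le> ennreal \<bar>b - a\<bar>" by (cases "a \<le> b") auto
  finally show ?thesis using m by (simp add: ennreal_plus[symmetric] del: ennreal_plus)
qed

lemma lipschitz_deriv_bound:
  assumes L: "L-lipschitz_on {a..b} y" and t: "a < t" "t < b" and D: "(y has_real_derivative D) (at t)"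
  shows "\<bar>D\<bar> \<le> L"
proof -
  have lim: "((\<lambda>x. (y x - y t) / (x - t)) \<longlongrightarrow> D) (at t)"
    using D by (simp add: has_field_derivative_iff)
  have ev: "eventually (\<lambda>x. x \<in> {a<..<b}) (at t)"
    using t by (intro eventually_at_in_open') auto
  have "eventually (\<lambda>x. \<bar>(y x - y t) / (x - t)\<bar> \<le> L) (at t)"
    using ev eventually_at_filter[THEN iffD1, OF eventually_at_in_open'[of "{a<..<b}" t]]
  proof -
    have "eventually (\<lambda>x. x \<noteq> t) (at t)" by (simp add: eventually_at_filter)
    with ev show ?thesis
    proof eventually_elim
      case (elim x)
      have "dist (y x) (y t) \<le> L * dist x t" using elim t by (intro lipschitz_onD[OF L]) auto
      then show ?case using elim by (simp add: dist_real_def abs_divide divide_le_eq)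
    qed
  qed
  then show ?thesis using tendsto_upperbound[OF tendsto_rabs[OF lim]] by simp
qed


definition MSig :: real where "MSig = (SOME M. M > 0 \<and> (\<forall>x. \<bar>deriv sig x\<bar> \<le> M))"

lemma MSig: "MSig > 0" "\<bar>deriv sig x\<bar> \<le> MSig"
proof -
  have "MSig > 0 \<and> (\<forall>x. \<bar>deriv sig x\<bar> \<le> MSig)"
    unfolding MSig_def using sig_deriv_bound by (rule someI_ex)
  then show "MSig > 0" "\<bar>deriv sig x\<bar> \<le> MSig" by auto
qed

lemma Jz_bound:
  assumes intK: "integrable lborel (\<lambda>w. indicator K w * real_of_ereal (\<phi> w))"
    and KR: "cball z R \<subseteq> K" and R: "R > 0"
  shows "\<bar>Jz \<phi> z R\<bar> \<le> 4 * (MSig / R\<^sup>2) * (\<integral>w. \<bar>indicator K w * real_of_ereal (\<phi> w)\<bar> \<partial>lborel)"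
proof -
  define f where "f = (\<lambda>w. indicator K w * real_of_ereal (\<phi> w))"
  define Bk where "Bk = (\<lambda>w. deriv sig ((cmod (w - z))\<^sup>2 / R\<^sup>2) / R\<^sup>2)"
  have contB: "continuous_on UNIV Bk"
    unfolding Bk_def using R by (intro continuous_intros continuous_on_compose2[OF sig_deriv_cont]) auto
  have B_bound: "\<bar>Bk w\<bar> \<le> MSig / R\<^sup>2" for w unfolding Bk_def using R MSig(2) by (simp add: divide_right_mono)
  have B_zero: "Bk w = 0" if "w \<notin> cball z R" for w
  proof -
    have "R \<le> cmod (w - z)" using that by (simp add: dist_norm norm_minus_commute)
    then have "R\<^sup>2 \<le> (cmod (w - z))\<^sup>2" using R by (intro power_mono) auto
    then have "(cmod (w - z))\<^sup>2 / R\<^sup>2 \<ge> 1" using R by simp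
    then show ?thesis unfolding Bk_def by (simp add: sig_deriv_zero)
  qed
  have eq: "real_of_ereal (\<phi> w) * Bk w = f w * Bk w" for w
  proof (cases "w \<in> K")
    case False then have "w \<notin> cball z R" using KR by auto
    then show ?thesis using B_zero False by (simp add: f_def)
  qed (simp add: f_def)
  have intf: "integrable lborel f" using intK by (simp add: f_def)
  have int1: "integrable lborel (\<lambda>w. f w * Bk w)" by (rule integrable_bounded_mult[OF intf contB B_bound])
  have int2: "integrable lborel (\<lambda>w. MSig / R\<^sup>2 * \<bar>f w\<bar>)" using intf by simp
  have "\<bar>\<integral>w. f w * Bk w \<partial>lborel\<bar> \<le> (\<integral>w. MSig / R\<^sup>2 * \<bar>f w\<bar> \<partial>lborel)"
  proof (rule integral_abs_bound_integral[OF int1 int2])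
    fix w
    have "\<bar>f w\<bar> * \<bar>Bk w\<bar> \<le> \<bar>f w\<bar> * (MSig / R\<^sup>2)" using B_bound by (intro mult_left_mono) auto
    then show "\<bar>f w * Bk w\<bar> \<le> MSig / R\<^sup>2 * \<bar>f w\<bar>" by (simp add: abs_mult mult.commute)
  qed
  also have "\<dots> = MSig / R\<^sup>2 * (\<integral>w. \<bar>f w\<bar> \<partial>lborel)" by simp
  finally have "\<bar>\<integral>w. f w * Bk w \<partial>lborel\<bar> \<le> MSig / R\<^sup>2 * (\<integral>w. \<bar>f w\<bar> \<partial>lborel)" .
  moreover have "(\<lambda>w. real_of_ereal (\<phi> w) * (deriv sig ((cmod (w - z))\<^sup>2 / R\<^sup>2) / R\<^sup>2)) = (\<lambda>w. f w * Bk w)"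
    using eq by (auto simp: Bk_def)
  then have "Jz \<phi> z R = 4 * (\<integral>w. f w * Bk w \<partial>lborel)"
    unfolding Jz_def by simp
  ultimately show ?thesis by (simp add: f_def abs_mult)
qed

lemma kz_measurable[measurable]: "kz z R \<in> borel_measurable borel"
  unfolding kz_def[abs_def] by measurable

context
  fixes U :: "complex set" and \<phi> :: "complex \<Rightarrow> ereal" and \<nu> :: "complex measure"
  assumes U: "open U" and usc: "usc_on U \<phi>" and fin: "\<forall>z\<in>U. \<phi> z < \<infinity>"
    and dl: "distr_laplacian_on U \<phi> \<nu>"
begin

lemma sets_nu: "sets \<nu> = sets borel" using dl by (simp add: distr_laplacian_on_def)

lemma meas_nu: "f \<in> borel_measurable borel \<Longrightarrow> f \<in> borel_measurable \<nu>"
  using measurable_cong_sets[OF sets_nu refl] by blast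

lemma pointwise1:
  assumes z: "z \<in> U" and R: "R > 0" and RU: "cball z R \<subseteq> U" and CJ: "\<bar>Jz \<phi> z R\<bar> \<le> CJ"
  shows "exp_neg (\<phi> z) \<le> ennreal (exp (CJ / (4 * pi))) * eexp (ennreal (1 / (2 * pi)) * (\<integral>\<^sup>+w. kz z R w \<partial>\<nu>))"
proof -
  define I where "I = (\<integral>\<^sup>+w. kz z R w \<partial>\<nu>)"
  have core': "ennreal (Jz \<phi> z R - 4 * pi * c) \<le> 2 * I" if "\<phi> z < ereal c" for c
  proof -
    have "ennreal (Jz \<phi> z R - 4 * pi * c) \<le> (\<integral>\<^sup>+w. 2 * kz z R w \<partial>\<nu>)"
      by (rule core[OF U usc fin dl z R RU that])
    also have "\<dots> = 2 * I" unfolding I_def by (rule nn_integral_cmult) (rule meas_nu, measurable)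
    finally show ?thesis .
  qed
  show ?thesis
  proof (cases "I = \<infinity>")
    case True
    have "ennreal (1 / (2 * pi)) * I = \<infinity>" using True by (simp add: ennreal_mult_top)
    then have "ennreal (exp (CJ / (4 * pi))) * eexp (ennreal (1 / (2 * pi)) * I) = \<infinity>"
      by (simp add: eexp_def ennreal_mult_top)
    then show ?thesis unfolding I_def by simp
  next
    case False
    then obtain k where k: "I = ennreal k" "k \<ge> 0" by (cases I) auto
    define L where "L = (Jz \<phi> z R - 2 * k) / (4 * pi)"
    have geL: "ereal L \<le> \<phi> z"
    proof (rule ccontr)
      assume "\<not> ereal L \<le> \<phi> z"
      then have "\<phi> z < ereal L" by simp
      then obtain c where c: "\<phi> z < ereal c" "ereal c < ereal L" using ereal_dense2 by blast
      define c' where "c' = c"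
      have c': "\<phi> z < ereal c'" "c' < L" using c by (auto simp: c'_def)
      have "ennreal (Jz \<phi> z R - 4 * pi * c') \<le> ennreal (2 * k)"
        using core'[OF c'(1)] k by (simp add: ennreal_mult)
      then have "Jz \<phi> z R - 4 * pi * c' \<le> 2 * k" using k by (simp add: ennreal_le_iff)
      then have "L \<le> c'" unfolding L_def by (simp add: divide_le_eq algebra_simps)
      then show False using c' by simp
    qed
    have fz: "\<phi> z < \<infinity>" using fin z by blast
    obtain p where p: "\<phi> z = ereal p" using geL fz by (cases "\<phi> z") auto
    have pL: "L \<le> p" using geL p by simp
    have "- p \<le> CJ / (4 * pi) + k / (2 * pi)"
    proof -
      have "- Jz \<phi> z R \<le> CJ" using CJ by linarith
      then have "2 * k - Jz \<phi> z R \<le> CJ + 2 * k" by linarith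
      then have "(2 * k - Jz \<phi> z R) / (4 * pi) \<le> (CJ + 2 * k) / (4 * pi)"
        using pi_gt_zero by (intro divide_right_mono) auto
      moreover have "- L = (2 * k - Jz \<phi> z R) / (4 * pi)" unfolding L_def by (simp add: field_simps)
      moreover have "(CJ + 2 * k) / (4 * pi) = CJ / (4 * pi) + k / (2 * pi)" by (simp add: field_simps)
      ultimately have "- L \<le> CJ / (4 * pi) + k / (2 * pi)" by simp
      then show ?thesis using pL by simp
    qed
    then have "exp (- p) \<le> exp (CJ / (4 * pi)) * exp (k / (2 * pi))" by (simp add: exp_add[symmetric])
    then have "exp_neg (\<phi> z) \<le> ennreal (exp (CJ / (4 * pi)) * exp (k / (2 * pi)))"
      using p by (simp add: exp_neg_def ennreal_leI)
    also have "\<dots> = ennreal (exp (CJ / (4 * pi))) * ennreal (exp (k / (2 * pi)))"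
      by (rule ennreal_mult) auto
    also have "ennreal (exp (k / (2 * pi))) = eexp (ennreal (1 / (2 * pi)) * I)"
    proof -
      have "ennreal (1 / (2 * pi)) * I = ennreal (k / (2 * pi))"
        using k by (simp add: ennreal_mult[symmetric])
      then show ?thesis using k by (simp add: eexp_def)
    qed
    finally show ?thesis unfolding I_def .
  qed
qed

end


context
  fixes U :: "complex set" and \<phi> :: "complex \<Rightarrow> ereal" and \<nu> :: "complex measure"
  assumes U: "open U" and usc: "usc_on U \<phi>" and fin: "\<forall>z\<in>U. \<phi> z < \<infinity>"
    and dl: "distr_laplacian_on U \<phi> \<nu>"
begin

lemma pointwise2:
  assumes MM: "emeasure \<nu> (space \<nu>) = ennreal M" and M: "M > 0" and m: "m = M / (2 * pi)" and R: "R > 0"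
  shows "eexp (ennreal (1 / (2 * pi)) * (\<integral>\<^sup>+w. kz z R w \<partial>\<nu>))
     \<le> 1 + ennreal (R powr m / M) * (\<integral>\<^sup>+w. Pk m (cmod (w - z)) \<partial>\<nu>)"
proof -
  have mpos: "m > 0" using M m by simp
  define f where "f = (\<lambda>w. ennreal m * kz z R w)"
  have fm: "f \<in> borel_measurable \<nu>" unfolding f_def by (intro meas_nu[OF U usc fin dl]) measurable
  have km: "kz z R \<in> borel_measurable \<nu>" by (intro meas_nu[OF U usc fin dl]) measurable
  have pm: "(\<lambda>w. Pk m (cmod (w - z))) \<in> borel_measurable \<nu>" by (intro meas_nu[OF U usc fin dl]) measurable
  have invM: "inverse (ennreal M) = ennreal (inverse M)" using M by (simp add: inverse_ennreal)
  have "(\<integral>\<^sup>+w. f w \<partial>\<nu>) / ennreal M = ennreal m * (\<integral>\<^sup>+w. kz z R w \<partial>\<nu>) * ennreal (inverse M)"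
    unfolding f_def divide_ennreal_def invM using km by (simp add: nn_integral_cmult)
  also have "\<dots> = ennreal (m * inverse M) * (\<integral>\<^sup>+w. kz z R w \<partial>\<nu>)"
    using mpos M by (simp add: ennreal_mult mult_ac)
  also have "m * inverse M = 1 / (2 * pi)" using M m by (simp add: field_simps)
  finally have e1: "ennreal (1 / (2 * pi)) * (\<integral>\<^sup>+w. kz z R w \<partial>\<nu>) = (\<integral>\<^sup>+w. f w \<partial>\<nu>) / ennreal M" by simp
  have "(\<integral>\<^sup>+w. eexp (f w) \<partial>\<nu>) \<le> (\<integral>\<^sup>+w. 1 + ennreal (R powr m) * Pk m (cmod (w - z)) \<partial>\<nu>)"
    unfolding f_def kz_def by (intro nn_integral_mono eexp_kernel mpos R)
  also have "\<dots> = ennreal M + ennreal (R powr m) * (\<integral>\<^sup>+w. Pk m (cmod (w - z)) \<partial>\<nu>)"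
    using pm MM by (simp add: nn_integral_add nn_integral_cmult)
  finally have e2: "(\<integral>\<^sup>+w. eexp (f w) \<partial>\<nu>) \<le> ennreal M + ennreal (R powr m) * (\<integral>\<^sup>+w. Pk m (cmod (w - z)) \<partial>\<nu>)" .
  have e3: "(ennreal M + ennreal (R powr m) * (\<integral>\<^sup>+w. Pk m (cmod (w - z)) \<partial>\<nu>)) / ennreal M
     = 1 + ennreal (R powr m / M) * (\<integral>\<^sup>+w. Pk m (cmod (w - z)) \<partial>\<nu>)"
  proof -
    have "(ennreal M + ennreal (R powr m) * (\<integral>\<^sup>+w. Pk m (cmod (w - z)) \<partial>\<nu>)) / ennreal M
      = ennreal M * ennreal (inverse M) + ennreal (R powr m) * ennreal (inverse M) * (\<integral>\<^sup>+w. Pk m (cmod (w - z)) \<partial>\<nu>)"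
      unfolding divide_ennreal_def invM by (simp add: distrib_right distrib_left mult_ac)
    also have "ennreal M * ennreal (inverse M) = 1" using M by (simp add: ennreal_mult[symmetric])
    also have "ennreal (R powr m) * ennreal (inverse M) = ennreal (R powr m / M)"
      using M by (simp add: ennreal_mult[symmetric] divide_inverse)
    finally show ?thesis .
  qed
  have "eexp (ennreal (1 / (2 * pi)) * (\<integral>\<^sup>+w. kz z R w \<partial>\<nu>)) \<le> (\<integral>\<^sup>+w. eexp (f w) \<partial>\<nu>) / ennreal M"
    unfolding e1 by (rule jensen_eexp[OF MM M fm])
  also have "\<dots> \<le> (ennreal M + ennreal (R powr m) * (\<integral>\<^sup>+w. Pk m (cmod (w - z)) \<partial>\<nu>)) / ennreal M"
    by (rule divide_right_mono_ennreal[OF e2])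
  also have "\<dots> = 1 + ennreal (R powr m / M) * (\<integral>\<^sup>+w. Pk m (cmod (w - z)) \<partial>\<nu>)" by (rule e3)
  finally show ?thesis .
qed

end


lemma sqrt_deriv_bound:
  assumes L: "L-lipschitz_on {a..b} y" and t: "t \<in> {a..b}"
  shows "sqrt (1 + (deriv y t)\<^sup>2) \<le> sqrt (1 + L\<^sup>2) + sqrt (1 + (SOME D::real. False)\<^sup>2)
     + sqrt (1 + (deriv y a)\<^sup>2) + sqrt (1 + (deriv y b)\<^sup>2)"
proof -
  have nn: "0 \<le> sqrt (1 + x\<^sup>2)" for x :: real by simp
  have "sqrt (1 + (deriv y t)\<^sup>2) \<le> sqrt (1 + L\<^sup>2) \<or> sqrt (1 + (deriv y t)\<^sup>2) = sqrt (1 + (SOME D::real. False)\<^sup>2)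
     \<or> sqrt (1 + (deriv y t)\<^sup>2) = sqrt (1 + (deriv y a)\<^sup>2) \<or> sqrt (1 + (deriv y t)\<^sup>2) = sqrt (1 + (deriv y b)\<^sup>2)"
  proof (cases "t = a \<or> t = b")
    case True then show ?thesis by auto
  next
    case False
    then have t': "a < t" "t < b" using t by auto
    show ?thesis
    proof (cases "\<exists>D. (y has_real_derivative D) (at t)")
      case True
      then obtain D where D: "(y has_real_derivative D) (at t)" by blast
      then have "deriv y t = D" by (rule DERIV_imp_deriv)
      moreover have "\<bar>D\<bar> \<le> L" by (rule lipschitz_deriv_bound[OF L t' D])
      then have "\<bar>D\<bar>\<^sup>2 \<le> L\<^sup>2" by (intro power_mono) auto
      then have "D\<^sup>2 \<le> L\<^sup>2" by simp
      ultimately show ?thesis by simp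
    next
      case False
      then have "(\<lambda>D. (y has_real_derivative D) (at t)) = (\<lambda>D. False)" by auto
      then have "deriv y t = (SOME D::real. False)" unfolding deriv_def by simp
      then show ?thesis by simp
    qed
  qed
  then show ?thesis using nn[of L] nn[of "SOME D::real. False"] nn[of "deriv y a"] nn[of "deriv y b"] by linarith
qed

theorem corollary2p10:
  fixes a b L :: real and y :: "real \<Rightarrow> real" and U :: "complex set"
    and \<phi> :: "complex \<Rightarrow> ereal" and \<nu> :: "complex measure"
  assumes "a < b"
    and "L-lipschitz_on {a..b} y"
    and "open U"
    and "(\<lambda>t. Complex t (y t)) ` {a..b} \<subseteq> U"
    and "subharmonic_on U \<phi>"
    and "distr_laplacian_on U \<phi> \<nu>"
    and "emeasure \<nu> U / ennreal (2 * pi) < 1"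
  shows "(\<integral>\<^sup>+ t. exp_neg (\<phi> (Complex t (y t))) * ennreal (sqrt (1 + (deriv y t)\<^sup>2))
            * indicator {a..b} t \<partial>lborel) < \<infinity>"
proof -
  note ab = assms(1) and Lip = assms(2) and U = assms(3) and GU = assms(4) and dl = assms(6)
  note sh = assms(5)[unfolded subharmonic_on_def]
  have usc: "usc_on U \<phi>" using sh[THEN conjunct2, THEN conjunct2, THEN conjunct1] .
  have fin: "\<forall>z\<in>U. \<phi> z < \<infinity>" using sh[THEN conjunct2, THEN conjunct1] .
  note dlu = dl[unfolded distr_laplacian_on_def]
  have sets_nu: "sets \<nu> = sets borel" using dlu[THEN conjunct1] .
  have space_nu: "space \<nu> = UNIV" using sets_eq_imp_space_eq[OF sets_nu] by simp
  have nuC: "emeasure \<nu> (- U) = 0" using dlu[THEN conjunct2, THEN conjunct1] .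
  have Usets: "U \<in> sets \<nu>" "- U \<in> sets \<nu>" using U sets_nu by auto
  have "emeasure \<nu> U < 1 * ennreal (2 * pi)"
    using assms(7) by (subst (asm) divide_less_ennreal) auto
  then have nuU: "emeasure \<nu> U < ennreal (2 * pi)" by simp
  have "emeasure \<nu> (space \<nu>) = emeasure \<nu> U + emeasure \<nu> (- U)"
    using plus_emeasure[OF Usets] space_nu by simp
  then have nusp: "emeasure \<nu> (space \<nu>) = emeasure \<nu> U" using nuC by simp
  define M where "M = enn2real (emeasure \<nu> U)"
  have fU: "emeasure \<nu> U \<noteq> \<infinity>" using nuU by (cases "emeasure \<nu> U") auto
  then have eU: "emeasure \<nu> U = ennreal M" unfolding M_def using ennreal_enn2real[of "emeasure \<nu> U"] fU by (simp add: less_top)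
  have M0: "M \<ge> 0" unfolding M_def by simp
  have MM: "emeasure \<nu> (space \<nu>) = ennreal M" "M \<ge> 0" "M < 2 * pi"
    using nuU nusp eU M0 by (auto simp: ennreal_less_iff)
  define m where "m = M / (2 * pi)"
  have m: "0 \<le> m" "m < 1" using MM by (auto simp: m_def)
  interpret nf: finite_measure \<nu> by (rule finite_measureI) (simp add: MM)
  interpret p: pair_sigma_finite lborel \<nu>
    by (intro pair_sigma_finite.intro lborel.sigma_finite_measure_axioms nf.sigma_finite_measure_axioms)

  define \<gamma> where "\<gamma> = (\<lambda>t. Complex t (y t))"
  have cy: "continuous_on {a..b} y" by (rule lipschitz_on_continuous_on[OF Lip])
  have cg: "continuous_on {a..b} \<gamma>"
    unfolding \<gamma>_def Complex_eq by (intro continuous_intros cy)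
  define \<Gamma> where "\<Gamma> = \<gamma> ` {a..b}"
  have cG: "compact \<Gamma>" unfolding \<Gamma>_def by (intro compact_continuous_image cg) auto
  have GU': "\<Gamma> \<subseteq> U" using GU by (simp add: \<Gamma>_def \<gamma>_def)
  obtain \<epsilon> where \<epsilon>: "\<epsilon> > 0" "(\<Union>x\<in>\<Gamma>. cball x \<epsilon>) \<subseteq> U"
    using compact_subset_open_imp_cball_epsilon_subset[OF cG U GU'] by blast
  define R where "R = \<epsilon> / 2"
  have R: "R > 0" using \<epsilon> by (simp add: R_def)
  define K where "K = {x + w | x w. x \<in> \<Gamma> \<and> w \<in> cball 0 R}"
  have cK: "compact K" unfolding K_def by (intro compact_sums cG compact_cball)
  have KU: "K \<subseteq> U"
  proof
    fix v assume "v \<in> K"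
    then obtain x w where "v = x + w" "x \<in> \<Gamma>" "w \<in> cball 0 R" unfolding K_def by blast
    then have "v \<in> cball x \<epsilon>" using R_def \<epsilon> by (auto simp: dist_norm)
    then show "v \<in> U" using \<epsilon>(2) \<open>x \<in> \<Gamma>\<close> by blast
  qed
  have ballK: "cball z R \<subseteq> K" if "z \<in> \<Gamma>" for z
  proof
    fix v assume "v \<in> cball z R"
    then have "v = z + (v - z)" "v - z \<in> cball 0 R" by (auto simp: dist_norm norm_minus_commute)
    then show "v \<in> K" unfolding K_def using that by blast
  qed
  have intK: "integrable lborel (\<lambda>w. indicator K w * real_of_ereal (\<phi> w))"
    using dlu[THEN conjunct2, THEN conjunct2, THEN conjunct2, THEN conjunct2, THEN conjunct1, rule_format, of K] cK KU
    unfolding set_integrable_def by simp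
  define CJ where "CJ = 4 * (MSig / R\<^sup>2) * (\<integral>w. \<bar>indicator K w * real_of_ereal (\<phi> w)\<bar> \<partial>lborel)"
  define C0 where "C0 = ennreal (exp (CJ / (4 * pi)))"
  define C1 where "C1 = (if M > 0 then ennreal (R powr m / M) else 0)"

  have pw: "exp_neg (\<phi> (\<gamma> t)) \<le> C0 * (1 + C1 * (\<integral>\<^sup>+w. Pk m \<bar>Re w - t\<bar> \<partial>\<nu>))" if t: "t \<in> {a..b}" for t
  proof -
    define z where "z = \<gamma> t"
    have zG: "z \<in> \<Gamma>" using t by (simp add: z_def \<Gamma>_def)
    have zU: "z \<in> U" using zG GU' by blast
    have RU: "cball z R \<subseteq> U" using ballK[OF zG] KU by blast
    have CJz: "\<bar>Jz \<phi> z R\<bar> \<le> CJ" unfolding CJ_def by (rule Jz_bound[OF intK ballK[OF zG] R])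
    have p1: "exp_neg (\<phi> z) \<le> C0 * eexp (ennreal (1 / (2 * pi)) * (\<integral>\<^sup>+w. kz z R w \<partial>\<nu>))"
      unfolding C0_def by (rule pointwise1[OF U usc fin dl zU R RU CJz])
    have PkRe: "(\<integral>\<^sup>+w. Pk m (cmod (w - z)) \<partial>\<nu>) \<le> (\<integral>\<^sup>+w. Pk m \<bar>Re w - t\<bar> \<partial>\<nu>)"
    proof (intro nn_integral_mono Pk_antimono)
      fix w
      have "\<bar>Re w - t\<bar> = \<bar>Re (w - z)\<bar>" by (simp add: z_def \<gamma>_def)
      also have "\<dots> \<le> cmod (w - z)" by (rule abs_Re_le_cmod)
      finally show "\<bar>Re w - t\<bar> \<le> cmod (w - z)" .
    qed (use m in auto)
    have "eexp (ennreal (1 / (2 * pi)) * (\<integral>\<^sup>+w. kz z R w \<partial>\<nu>)) \<le> 1 + C1 * (\<integral>\<^sup>+w. Pk m \<bar>Re w - t\<bar> \<partial>\<nu>)"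
    proof (cases "M > 0")
      case True
      have "eexp (ennreal (1 / (2 * pi)) * (\<integral>\<^sup>+w. kz z R w \<partial>\<nu>)) \<le> 1 + ennreal (R powr m / M) * (\<integral>\<^sup>+w. Pk m (cmod (w - z)) \<partial>\<nu>)"
        by (rule pointwise2[OF U usc fin dl MM(1) True m_def R])
      also have "\<dots> \<le> 1 + C1 * (\<integral>\<^sup>+w. Pk m \<bar>Re w - t\<bar> \<partial>\<nu>)"
        using True PkRe by (auto simp: C1_def intro!: add_left_mono mult_left_mono)
      finally show ?thesis .
    next
      case False
      then have M0: "M = 0" using MM by simp
      have "(\<integral>\<^sup>+w. kz z R w \<partial>\<nu>) \<le> (\<integral>\<^sup>+w. \<infinity> \<partial>\<nu>)" by (intro nn_integral_mono) simp
      also have "\<dots> = 0" using MM M0 by simp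
      finally have "(\<integral>\<^sup>+w. kz z R w \<partial>\<nu>) = 0" by simp
      then show ?thesis by (simp add: eexp_def)
    qed
    then have "C0 * eexp (ennreal (1 / (2 * pi)) * (\<integral>\<^sup>+w. kz z R w \<partial>\<nu>)) \<le> C0 * (1 + C1 * (\<integral>\<^sup>+w. Pk m \<bar>Re w - t\<bar> \<partial>\<nu>))"
      by (rule mult_left_mono) simp
    with p1 show ?thesis by (simp add: z_def)
  qed

  define S where "S = sqrt (1 + L\<^sup>2) + sqrt (1 + (SOME D::real. False)\<^sup>2) + sqrt (1 + (deriv y a)\<^sup>2) + sqrt (1 + (deriv y b)\<^sup>2)"
  define h where "h = (\<lambda>t w. Pk m \<bar>Re w - t\<bar> * indicator {a..b} t)"
  have hm: "case_prod h \<in> borel_measurable (lborel \<Otimes>\<^sub>M \<nu>)"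
  proof -
    have "case_prod h \<in> borel_measurable (lborel \<Otimes>\<^sub>M borel)" unfolding h_def by measurable
    moreover have "sets (lborel \<Otimes>\<^sub>M \<nu>) = sets (lborel \<Otimes>\<^sub>M (borel :: complex measure))"
      by (rule sets_pair_measure_cong[OF refl sets_nu])
    ultimately show ?thesis using measurable_cong_sets by blast
  qed
  define K0 where "K0 = 2 / (1 - m) + \<bar>b - a\<bar>"

  have T1: "(\<integral>\<^sup>+ t. exp_neg (\<phi> (Complex t (y t))) * ennreal (sqrt (1 + (deriv y t)\<^sup>2)) * indicator {a..b} t \<partial>lborel)
     \<le> (\<integral>\<^sup>+ t. C0 * ennreal S * (indicator {a..b} t + C1 * (\<integral>\<^sup>+w. h t w \<partial>\<nu>)) \<partial>lborel)"
  proof (intro nn_integral_mono)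
    fix t :: real
    show "exp_neg (\<phi> (Complex t (y t))) * ennreal (sqrt (1 + (deriv y t)\<^sup>2)) * indicator {a..b} t
       \<le> C0 * ennreal S * (indicator {a..b} t + C1 * (\<integral>\<^sup>+w. h t w \<partial>\<nu>))"
    proof (cases "t \<in> {a..b}")
      case True
      have s: "ennreal (sqrt (1 + (deriv y t)\<^sup>2)) \<le> ennreal S"
        unfolding S_def by (intro ennreal_leI sqrt_deriv_bound[OF Lip True])
      have e: "exp_neg (\<phi> (Complex t (y t))) \<le> C0 * (1 + C1 * (\<integral>\<^sup>+w. Pk m \<bar>Re w - t\<bar> \<partial>\<nu>))"
        using pw[OF True] by (simp add: \<gamma>_def)
      have "exp_neg (\<phi> (Complex t (y t))) * ennreal (sqrt (1 + (deriv y t)\<^sup>2))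
          \<le> C0 * (1 + C1 * (\<integral>\<^sup>+w. Pk m \<bar>Re w - t\<bar> \<partial>\<nu>)) * ennreal S"
        by (intro mult_mono e s) auto
      then show ?thesis using True by (simp add: h_def mult_ac)
    qed simp
  qed
  have T1': "(\<integral>\<^sup>+ t. C0 * ennreal S * (indicator {a..b} t + C1 * (\<integral>\<^sup>+w. h t w \<partial>\<nu>)) \<partial>lborel)
     = C0 * ennreal S * ((\<integral>\<^sup>+ t. indicator {a..b} t \<partial>lborel) + C1 * (\<integral>\<^sup>+ t. (\<integral>\<^sup>+w. h t w \<partial>\<nu>) \<partial>lborel))"
    using hm by (simp add: nn_integral_cmult nn_integral_add)
  have "(\<integral>\<^sup>+ t. (\<integral>\<^sup>+w. h t w \<partial>\<nu>) \<partial>lborel) = (\<integral>\<^sup>+ w. (\<integral>\<^sup>+t. h t w \<partial>lborel) \<partial>\<nu>)"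
    by (rule p.Fubini'[OF hm, symmetric])
  also have "\<dots> \<le> (\<integral>\<^sup>+ w. ennreal K0 \<partial>\<nu>)"
  proof (cases "M = 0")
    case True
    have "(\<integral>\<^sup>+ w. (\<integral>\<^sup>+t. h t w \<partial>lborel) \<partial>\<nu>) \<le> (\<integral>\<^sup>+ w. \<infinity> \<partial>\<nu>)" by (intro nn_integral_mono) simp
    also have "\<dots> = 0" using MM True by simp
    finally show ?thesis by simp
  next
    case False
    then have mpos: "0 < m" using MM by (simp add: m_def)
    show ?thesis
    proof (intro nn_integral_mono)
      fix w show "(\<integral>\<^sup>+t. h t w \<partial>lborel) \<le> ennreal K0"
        unfolding h_def K0_def using Pk_int_line[of m "Re w" a b] m mpos by simp
    qed
  qed
  also have "\<dots> = ennreal K0 * ennreal M" using MM by simp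
  finally have T2: "(\<integral>\<^sup>+ t. (\<integral>\<^sup>+w. h t w \<partial>\<nu>) \<partial>lborel) \<le> ennreal K0 * ennreal M" .
  have T3: "C0 * ennreal S * ((\<integral>\<^sup>+ t. indicator {a..b} t \<partial>lborel) + C1 * (\<integral>\<^sup>+ t. (\<integral>\<^sup>+w. h t w \<partial>\<nu>) \<partial>lborel))
     \<le> C0 * ennreal S * (ennreal (b - a) + C1 * (ennreal K0 * ennreal M))"
  proof -
    have "(\<integral>\<^sup>+ t. indicator {a..b} t \<partial>lborel) = ennreal (b - a)" using ab by simp
    moreover have "C1 * (\<integral>\<^sup>+ t. (\<integral>\<^sup>+w. h t w \<partial>\<nu>) \<partial>lborel) \<le> C1 * (ennreal K0 * ennreal M)"
      by (rule mult_left_mono[OF T2]) simp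
    ultimately show ?thesis by (intro mult_left_mono add_left_mono) simp_all
  qed
  have T4: "C0 * ennreal S * (ennreal (b - a) + C1 * (ennreal K0 * ennreal M)) < \<infinity>"
  proof -
    have mt: "x * y < \<infinity>" if "x < \<infinity>" "y < \<infinity>" for x y :: ennreal
      using that by (simp add: ennreal_mult_less_top)
    have at: "x + y < \<infinity>" if "x < \<infinity>" "y < \<infinity>" for x y :: ennreal
      using that by (simp add: less_top[symmetric])
    have C1f: "C1 < \<infinity>" by (simp add: C1_def)
    show ?thesis unfolding C0_def by (intro mt at C1f) simp_all
  qed
  show ?thesis using le_less_trans[OF order_trans[OF T1[unfolded T1'] T3] T4] .
qed


end
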